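(* Let $E\subset\mathbb{R}$ be an $s$-regular set and $F\subset\mathbb{R}$ be a $t$-regular set, both totally ordered by the order of $\mathbb{R}$, and assume that one of $E,F$ is a standard Cantor set. If $s<t$, there is an order-preserving bi-Lipschitz embedding $\varphi:E\to F$ whose bi-Lipschitz constants depend only on the diameters of $E$ and $F$, their Ahlfors regularity constants, and on $s$ and $t$.
   Context: A compact set $E\subset\mathbb{R}$ is $s$-regular (Ahlfors $s$-regular) if there is a Borel measure $\kappa$ supported on $E$ and constants $0<c\le C$ with $c\,r^s\le\kappa(B(x,r))\le C\,r^s$ for all $x\in E$ and $0<r\le\mathrm{diam}(E)$. A standard Cantor set of dimension $t=\log2/\log p$, $p>2$, is the set obtained from $[0,1]$ by repeatedly cutting each retained closed interval $I$ into consecutive pieces of lengths $|I|/p,(p-2)|I|/p,|I|/p$ and removing the open middle piece. $\varphi$ is order-preserving if $x<y$ implies $\varphi(x)<\varphi(y)$, and bi-Lipschitz if $L^{-1}|x-y|\le|\varphi(x)-\varphi(y)|\le L|x-y|$ for some $L\ge1$. *)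

theory Defs
  imports "HOL-Analysis.Analysis"
begin

definition ahlfors_regular :: "real set \<Rightarrow> real \<Rightarrow> real measure \<Rightarrow> real \<Rightarrow> real \<Rightarrow> bool" where
  "ahlfors_regular E s \<kappa> c C \<longleftrightarrow>
     compact E \<and> sets \<kappa> = sets borel \<and> emeasure \<kappa> (UNIV - E) = 0 \<and>
     0 < c \<and> c \<le> C \<and>
     (\<forall>x\<in>E. \<forall>r. 0 < r \<and> r \<le> diameter E \<longrightarrow>
        ennreal (c * r powr s) \<le> emeasure \<kappa> (cball x r) \<and>
        emeasure \<kappa> (cball x r) \<le> ennreal (C * r powr s))"

text \<open>Retained intervals of the standard Cantor construction with ratio p, as pairs
  (left endpoint, length): each [a, a+l] is replaced by [a, a+l/p] and [a+l-l/p, a+l].\<close>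
fun cantor_level :: "real \<Rightarrow> nat \<Rightarrow> (real \<times> real) set" where
  "cantor_level p 0 = {(0, 1)}"
| "cantor_level p (Suc n) =
     (\<Union>(a, l)\<in>cantor_level p n. {(a, l / p), (a + l - l / p, l / p)})"

definition cantor_set :: "real \<Rightarrow> real set" where
  "cantor_set p = (\<Inter>n. \<Union>(a, l)\<in>cantor_level p n. {a..a + l})"

end

theory Submission
  imports Defs
begin

locale areg =
  fixes E :: "real set" and s :: real and \<kappa> :: "real measure" and c C :: real
  assumes reg: "ahlfors_regular E s \<kappa> c C"
    and dpos: "diameter E > 0"
begin

abbreviation "d \<equiv> diameter E"

lemma cmp: "compact E" and sk: "sets \<kappa> = sets borel" and off: "emeasure \<kappa> (UNIV - E) = 0"
  and cpos: "0 < c" and cC: "c \<le> C"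
  and regb: "\<And>x r. x \<in> E \<Longrightarrow> 0 < r \<Longrightarrow> r \<le> d \<Longrightarrow>
        ennreal (c * r powr s) \<le> emeasure \<kappa> (cball x r) \<and> emeasure \<kappa> (cball x r) \<le> ennreal (C * r powr s)"
  using reg unfolding ahlfors_regular_def by auto

lemma Cpos: "0 < C" using cpos cC by simp

lemma bnd: "bounded E" using cmp compact_imp_bounded by blast
lemma cls: "closed E" using cmp compact_imp_closed by blast

lemma ne: "E \<noteq> {}" using dpos by auto

lemma meas[simp]: "A \<in> sets borel \<Longrightarrow> A \<in> sets \<kappa>" using sk by simp

lemma measE[simp]: "E \<in> sets \<kappa>" "UNIV - E \<in> sets \<kappa>" "cball x r \<in> sets \<kappa>"
  using cls by auto

lemma dist_le: "x \<in> E \<Longrightarrow> y \<in> E \<Longrightarrow> \<bar>x - y\<bar> \<le> d"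
  using diameter_bounded_bound[OF bnd, of x y] by (simp add: dist_real_def)

lemma lower: "x \<in> E \<Longrightarrow> 0 < r \<Longrightarrow> r \<le> d \<Longrightarrow> ennreal (c * r powr s) \<le> emeasure \<kappa> (cball x r)"
  using regb by blast

lemma upper0: "x \<in> E \<Longrightarrow> 0 < r \<Longrightarrow> r \<le> d \<Longrightarrow> emeasure \<kappa> (cball x r) \<le> ennreal (C * r powr s)"
  using regb by blast

lemma cover_off: "emeasure \<kappa> A \<le> emeasure \<kappa> B" if "A \<inter> E \<subseteq> B" "B \<in> sets borel" for A B
proof -
  have "A \<subseteq> B \<union> (UNIV - E)" using that by auto
  hence "emeasure \<kappa> A \<le> emeasure \<kappa> (B \<union> (UNIV - E))"
    by (intro emeasure_mono) (use that cls in auto)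
  also have "\<dots> \<le> emeasure \<kappa> B + emeasure \<kappa> (UNIV - E)"
    by (rule emeasure_subadditive) (use that in auto)
  finally show ?thesis using off by simp
qed

lemma total: "x \<in> E \<Longrightarrow> emeasure \<kappa> A \<le> ennreal (C * d powr s)"
proof -
  assume x: "x \<in> E"
  have "emeasure \<kappa> A \<le> emeasure \<kappa> (cball x d)"
    by (rule cover_off) (use dist_le[OF x] in \<open>auto simp: dist_real_def\<close>)
  also have "\<dots> \<le> ennreal (C * d powr s)" using upper0[OF x dpos] by simp
  finally show ?thesis .
qed

lemma s_nonneg: "0 \<le> s"
proof (rule ccontr)
  assume "\<not> 0 \<le> s" hence s: "s < 0" by simp
  obtain x where x: "x \<in> E" using ne by auto
  define a where "a = c / (2*C)"
  define e where "e = -1/s"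
  define r where "r = d * a powr e"
  have q: "0 < a" "a < 1" using cpos cC by (auto simp: a_def)
  have e: "0 < e" using s by (simp add: e_def)
  have pw: "a powr e < 1" using powr_less_mono2[OF e, of a 1] q by simp
  have rpos: "0 < r" using q dpos by (simp add: r_def)
  have rle: "r \<le> d" using pw dpos unfolding r_def by (simp add: mult_less_cancel_left1 less_imp_le)
  have "r powr s = d powr s * (a powr e) powr s"
    unfolding r_def using dpos q by (simp add: powr_mult)
  also have "(a powr e) powr s = a powr (-1)"
    using s by (simp add: powr_powr e_def)
  also have "a powr (-1) = 2*C/c" using q cpos Cpos by (simp add: powr_minus a_def)
  finally have rs: "r powr s = d powr s * (2*C/c)" .
  have "ennreal (c * r powr s) \<le> emeasure \<kappa> (cball x r)" using lower[OF x rpos rle] .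
  also have "\<dots> \<le> ennreal (C * d powr s)" using total[OF x] .
  finally have "c * r powr s \<le> C * d powr s" using Cpos by (simp add: ennreal_le_iff)
  moreover have "c * r powr s = 2 * (C * d powr s)" using rs cpos by simp
  moreover have "0 < C * d powr s" using Cpos dpos by simp
  ultimately show False by simp
qed

lemma upper: assumes x: "x \<in> E" and r: "0 < r" shows "emeasure \<kappa> (cball x r) \<le> ennreal (C * r powr s)"
proof (cases "r \<le> d")
  case True
  then show ?thesis using upper0 x r by blast
next
  case False
  have "emeasure \<kappa> (cball x r) \<le> ennreal (C * d powr s)" using total[OF x] .
  also have "\<dots> \<le> ennreal (C * r powr s)"
    using False dpos s_nonneg Cpos by (intro ennreal_leI mult_left_mono powr_mono2) auto
  finally show ?thesis .
qed

end

context areg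
begin

lemma packing:
  assumes Y: "finite Y" "Y \<subseteq> E" and x: "x \<in> E" and R: "\<forall>y\<in>Y. \<bar>y - x\<bar> \<le> R"
    and sep: "\<forall>y\<in>Y. \<forall>y'\<in>Y. y \<noteq> y' \<longrightarrow> \<delta> \<le> \<bar>y - y'\<bar>" and \<delta>: "0 < \<delta>" "\<delta> \<le> 3*d"
  shows "real (card Y) * (c * (\<delta>/3) powr s) \<le> C * (R + \<delta>/3) powr s"
proof (cases "Y = {}")
  case True
  then show ?thesis using Cpos by simp
next
  case False
  then obtain y0 where "y0 \<in> Y" by auto
  hence R0: "0 \<le> R" using R by force
  define B where "B y = cball (y::real) (\<delta>/3)" for y
  have disj: "disjoint_family_on B Y"
  proof (unfold disjoint_family_on_def, intro ballI impI)
    fix y y' assume yy: "y \<in> Y" "y' \<in> Y" "y \<noteq> y'"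
    show "B y \<inter> B y' = {}"
    proof (rule ccontr)
      assume "B y \<inter> B y' \<noteq> {}"
      then obtain z where "z \<in> B y" "z \<in> B y'" by auto
      hence "\<bar>y - y'\<bar> \<le> 2*\<delta>/3" unfolding B_def by (auto simp: dist_real_def abs_if split: if_splits)
      moreover have "\<delta> \<le> \<bar>y - y'\<bar>" using sep yy by auto
      ultimately show False using \<delta> by simp
    qed
  qed
  have "(\<Sum>y\<in>Y. ennreal (c * (\<delta>/3) powr s)) \<le> (\<Sum>y\<in>Y. emeasure \<kappa> (B y))"
    by (intro sum_mono) (use Y \<delta> in \<open>auto simp: B_def intro!: lower\<close>)
  also have "\<dots> = emeasure \<kappa> (\<Union>y\<in>Y. B y)"
  proof (rule sum_emeasure[OF _ disj Y(1)])
    show "B ` Y \<subseteq> sets \<kappa>" by (auto simp: B_def)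
  qed
  also have "\<dots> \<le> emeasure \<kappa> (cball x (R + \<delta>/3))"
  proof (rule emeasure_mono)
    show "(\<Union>y\<in>Y. B y) \<subseteq> cball x (R + \<delta>/3)"
    proof
      fix z assume "z \<in> (\<Union>y\<in>Y. B y)"
      then obtain y where "y \<in> Y" "dist y z \<le> \<delta>/3" unfolding B_def by auto
      hence "\<bar>z - y\<bar> \<le> \<delta>/3" by (simp add: dist_real_def abs_minus_commute)
      moreover have "\<bar>y - x\<bar> \<le> R" using R \<open>y \<in> Y\<close> by auto
      ultimately have "\<bar>x - z\<bar> \<le> R + \<delta>/3" by arith
      thus "z \<in> cball x (R + \<delta>/3)" by (simp add: dist_real_def)
    qed
  qed simp
  also have "\<dots> \<le> ennreal (C * (R + \<delta>/3) powr s)"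
    by (rule upper[OF x]) (use R0 \<delta> in simp)
  finally have "ennreal (real (card Y) * (c * (\<delta>/3) powr s)) \<le> ennreal (C * (R + \<delta>/3) powr s)"
    using cpos by (simp add: ennreal_mult ennreal_of_nat_eq_real_of_nat)
  then show ?thesis using Cpos by (subst (asm) ennreal_le_iff) auto
qed

lemma covering:
  assumes I: "finite I" "y ` I \<subseteq> E" and cov: "A \<inter> E \<subseteq> (\<Union>i\<in>I. cball (y i) r)" and r: "0 < r"
  shows "emeasure \<kappa> A \<le> ennreal (real (card I) * (C * r powr s))"
proof -
  have bor: "(\<Union>i\<in>I. cball (y i) r) \<in> sets borel"
    by (intro sets.finite_UN I) auto
  have "emeasure \<kappa> A \<le> emeasure \<kappa> (\<Union>i\<in>I. cball (y i) r)"
    by (rule cover_off[OF cov bor])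
  also have "\<dots> \<le> (\<Sum>i\<in>I. emeasure \<kappa> (cball (y i) r))"
    by (rule emeasure_subadditive_finite) (use I in auto)
  also have "\<dots> \<le> (\<Sum>i\<in>I. ennreal (C * r powr s))"
    by (intro sum_mono upper) (use I r in auto)
  also have "\<dots> = ennreal (real (card I) * (C * r powr s))"
    using Cpos by (simp add: ennreal_mult ennreal_of_nat_eq_real_of_nat)
  finally show ?thesis .
qed

end

definition wt :: "real \<Rightarrow> nat \<Rightarrow> real" where "wt p j = (p - 1) / p ^ Suc j"
definition bt :: "real \<Rightarrow> (nat \<Rightarrow> bool) \<Rightarrow> nat \<Rightarrow> real" where
  "bt p b j = (if b j then wt p j else 0)"
definition bsum :: "real \<Rightarrow> (nat \<Rightarrow> bool) \<Rightarrow> real" where "bsum p b = suminf (bt p b)"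

lemma wt_sums: assumes p: "1 < p" shows "(\<lambda>j. wt p (j + k)) sums (1 / p ^ k)"
proof -
  have g: "(\<lambda>j. (1/p) ^ j) sums (1 / (1 - 1/p))" using p by (intro geometric_sums) auto
  have "(\<lambda>j. (p - 1) / p ^ Suc k * (1/p) ^ j) sums ((p - 1) / p ^ Suc k * (1 / (1 - 1/p)))"
    by (rule sums_mult[OF g])
  moreover have "(\<lambda>j. (p - 1) / p ^ Suc k * (1/p) ^ j) = (\<lambda>j. wt p (j + k))"
    by (rule ext) (simp add: wt_def power_add power_divide field_simps)
  moreover have "(p - 1) / p ^ Suc k * (1 / (1 - 1/p)) = 1 / p ^ k"
    using p by (simp add: field_simps)
  ultimately show ?thesis by simp
qed

lemma wt_nonneg: "1 < p \<Longrightarrow> 0 \<le> wt p j" by (simp add: wt_def)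
lemma bt_nonneg: "1 < p \<Longrightarrow> 0 \<le> bt p b j" by (simp add: bt_def wt_nonneg)
lemma bt_le: "1 < p \<Longrightarrow> bt p b j \<le> wt p j" by (simp add: bt_def wt_nonneg)

lemma bt_summable: assumes p: "1 < p" shows "summable (\<lambda>j. bt p b (j + k))"
proof (rule summable_comparison_test)
  show "\<exists>N. \<forall>n\<ge>N. norm (bt p b (n + k)) \<le> wt p (n + k)"
    using p by (auto simp: bt_nonneg bt_le)
  show "summable (\<lambda>n. wt p (n + k))" using wt_sums[OF p] by (rule sums_summable)
qed

lemma bt_summable0: "1 < p \<Longrightarrow> summable (bt p b)"
  using bt_summable[of p b 0] by simp

lemma tail_bounds: assumes p: "1 < p"
  shows "0 \<le> (\<Sum>j. bt p b (j + k))" "(\<Sum>j. bt p b (j + k)) \<le> 1 / p ^ k"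
proof -
  show "0 \<le> (\<Sum>j. bt p b (j + k))" using bt_summable[OF p] bt_nonneg[OF p] by (intro suminf_nonneg) auto
  have "(\<Sum>j. bt p b (j + k)) \<le> (\<Sum>j. wt p (j + k))"
    by (intro suminf_le bt_le[OF p] bt_summable[OF p] sums_summable[OF wt_sums[OF p]])
  also have "\<dots> = 1 / p ^ k" using wt_sums[OF p] by (simp add: sums_iff)
  finally show "(\<Sum>j. bt p b (j + k)) \<le> 1 / p ^ k" .
qed

lemma bsum_split: "1 < p \<Longrightarrow> bsum p b = (\<Sum>i<k. bt p b i) + (\<Sum>j. bt p b (j + k))"
  unfolding bsum_def using suminf_split_initial_segment[OF bt_summable0, of p b k] by simp

lemma bsum_bounds: "1 < p \<Longrightarrow> 0 \<le> bsum p b \<and> bsum p b \<le> 1"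
  using tail_bounds[of p b 0] by (simp add: bsum_def)

lemma bsum_dist:
  assumes p: "2 < p" and eq: "\<forall>i<j. b i = b' i" and b: "\<not> b j" "b' j"
  shows "(p - 2) / p ^ Suc j \<le> bsum p b' - bsum p b \<and> bsum p b' - bsum p b \<le> 1 / p ^ j"
proof -
  have p1: "1 < p" using p by simp
  have "(\<Sum>i<Suc j. bt p b' i) - (\<Sum>i<Suc j. bt p b i) = wt p j"
  proof -
    have "(\<Sum>i<j. bt p b' i) = (\<Sum>i<j. bt p b i)" using eq by (intro sum.cong) (auto simp: bt_def)
    thus ?thesis using b by (simp add: bt_def)
  qed
  moreover note t1 = tail_bounds[OF p1, of b "Suc j"] and t2 = tail_bounds[OF p1, of b' "Suc j"]
  moreover have "bsum p b' - bsum p b = ((\<Sum>i<Suc j. bt p b' i) - (\<Sum>i<Suc j. bt p b i))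
      + ((\<Sum>i. bt p b' (i + Suc j)) - (\<Sum>i. bt p b (i + Suc j)))"
    using bsum_split[OF p1, of b "Suc j"] bsum_split[OF p1, of b' "Suc j"] by simp
  moreover have "wt p j - 1 / p ^ Suc j = (p - 2) / p ^ Suc j"
    by (simp add: wt_def diff_divide_distrib)
  moreover have "wt p j + 1 / p ^ Suc j = 1 / p ^ j"
    using p by (simp add: wt_def field_simps)
  ultimately show ?thesis by linarith
qed

lemma first_diff:
  assumes "b \<noteq> (b' :: nat \<Rightarrow> bool)"
  obtains j where "\<forall>i<j. b i = b' i" "b j \<noteq> b' j"
proof -
  have "\<exists>j. b j \<noteq> b' j" using assms by auto
  define j where "j = (LEAST j. b j \<noteq> b' j)"
  have "b j \<noteq> b' j" unfolding j_def by (rule LeastI_ex) fact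
  moreover have "\<forall>i<j. b i = b' i" unfolding j_def using not_less_Least by blast
  ultimately show ?thesis using that by blast
qed

lemma bsum_less:
  assumes p: "2 < p" and lt: "bsum p b < bsum p b'"
  obtains j where "\<forall>i<j. b i = b' i" "\<not> b j" "b' j"
proof -
  have "b \<noteq> b'" using lt by auto
  then obtain j where j: "\<forall>i<j. b i = b' i" "b j \<noteq> b' j" by (rule first_diff)
  show ?thesis
  proof (cases "b j")
    case True
    hence "\<not> b' j" using j by simp
    hence "(p - 2) / p ^ Suc j \<le> bsum p b - bsum p b'" using bsum_dist[OF p, of j b' b] j True by auto
    moreover have "0 < (p - 2) / p ^ Suc j" using p by simp
    ultimately show ?thesis using lt by simp
  next
    case False
    thus ?thesis using j that by auto
  qed
qed

definition chd :: "real \<Rightarrow> real \<times> real \<Rightarrow> (real \<times> real) set" where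
  "chd p = (\<lambda>(a, l). {(a, l / p), (a + l - l / p, l / p)})"
definition Lm :: "real \<Rightarrow> real \<times> real \<Rightarrow> real \<times> real" where "Lm p = (\<lambda>(a, l). (a / p, l / p))"
definition Rm :: "real \<Rightarrow> real \<times> real \<Rightarrow> real \<times> real" where "Rm p = (\<lambda>(a, l). (a / p + 1 - 1/p, l / p))"

lemma cl_Suc: "cantor_level p (Suc n) = \<Union>(chd p ` cantor_level p n)"
  by (simp add: chd_def)

lemma chd_L: "p \<noteq> 0 \<Longrightarrow> chd p (Lm p x) = Lm p ` chd p x"
  by (cases x) (auto simp: chd_def Lm_def field_simps)
lemma chd_R: "p \<noteq> 0 \<Longrightarrow> chd p (Rm p x) = Rm p ` chd p x"
  by (cases x) (auto simp: chd_def Rm_def field_simps)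

lemma cl_alt: assumes "p \<noteq> 0"
  shows "cantor_level p (Suc n) = Lm p ` cantor_level p n \<union> Rm p ` cantor_level p n"
proof (induction n)
  case 0
  show ?case using assms by (auto simp: chd_def Lm_def Rm_def)
next
  case (Suc n)
  have "cantor_level p (Suc (Suc n)) = \<Union>(chd p ` (Lm p ` cantor_level p n \<union> Rm p ` cantor_level p n))"
    by (simp only: cl_Suc[of p "Suc n"] Suc.IH)
  also have "\<dots> = Lm p ` \<Union>(chd p ` cantor_level p n) \<union> Rm p ` \<Union>(chd p ` cantor_level p n)"
    by (simp add: image_Un image_image chd_L[OF assms] chd_R[OF assms] image_UN)
  also have "\<dots> = Lm p ` cantor_level p (Suc n) \<union> Rm p ` cantor_level p (Suc n)"
    by (simp only: cl_Suc)
  finally show ?case .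
qed

lemma cl_props: assumes "1 < p"
  shows "(a, l) \<in> cantor_level p n \<Longrightarrow> l = 1 / p ^ n \<and> 0 \<le> a \<and> a + l \<le> 1"
proof (induction n arbitrary: a l)
  case 0
  then show ?case by simp
next
  case (Suc n)
  from Suc.prems have "(a, l) \<in> \<Union>(chd p ` cantor_level p n)" by (simp only: cl_Suc)
  then obtain y where y: "y \<in> cantor_level p n" "(a, l) \<in> chd p y" by blast
  obtain a0 l0 where y0: "y = (a0, l0)" by (cases y)
  have al0: "(a0, l0) \<in> cantor_level p n" and ch: "(a, l) \<in> chd p (a0, l0)" using y y0 by auto
  have ih: "l0 = 1 / p ^ n" "0 \<le> a0" "a0 + l0 \<le> 1" using Suc.IH[OF al0] by auto
  have l0: "0 \<le> l0" using ih assms by simp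
  have "l0 \<le> l0 * p" using mult_left_mono[of 1 p l0] l0 assms by simp
  hence "l0 / p \<le> l0" "0 \<le> l0 / p" using assms l0 by (auto simp: divide_le_eq)
  then show ?case using ch ih by (auto simp: chd_def)
qed

lemma cl_finite: "finite (cantor_level p n) \<and> card (cantor_level p n) \<le> 2 ^ n"
proof (induction n)
  case 0
  then show ?case by simp
next
  case (Suc n)
  have fin: "finite (\<Union>(chd p ` cantor_level p n))" using Suc.IH by (auto simp: chd_def)
  have "card (\<Union>(chd p ` cantor_level p n)) \<le> (\<Sum>x\<in>cantor_level p n. card (chd p x))"
    by (rule card_UN_le) (use Suc.IH in auto)
  also have "\<dots> \<le> (\<Sum>x\<in>cantor_level p n. 2)"
    by (intro sum_mono) (auto simp: chd_def card_insert_le_m1 card_insert_if)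
  also have "\<dots> \<le> 2 * 2 ^ n" using Suc.IH by simp
  finally have "card (\<Union>(chd p ` cantor_level p n)) \<le> 2 ^ Suc n" by simp
  thus ?case using fin unfolding cl_Suc by blast
qed

lemma in_cantor: "x \<in> cantor_set p \<longleftrightarrow> (\<forall>n. \<exists>(a, l)\<in>cantor_level p n. a \<le> x \<and> x \<le> a + l)"
  unfolding cantor_set_def by (auto split: prod.splits)

lemma cantor_01: "x \<in> cantor_set p \<Longrightarrow> 0 \<le> x \<and> x \<le> 1"
  unfolding in_cantor by (drule spec[of _ 0]) auto

lemma Lsub: assumes p: "1 < p" and al: "(a, l) \<in> cantor_level p n" and x: "a / p \<le> x" "x \<le> a / p + l / p"
  shows "x \<le> 1/p \<and> a \<le> p * x \<and> p * x \<le> a + l"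
proof -
  have pr: "l = 1 / p ^ n \<and> 0 \<le> a \<and> a + l \<le> 1" using cl_props[OF p al] .
  have "x \<le> (a + l) / p" using x by (simp add: add_divide_distrib)
  moreover have "(a + l) / p \<le> 1 / p" using pr p by (simp add: divide_right_mono)
  moreover have "a \<le> p * x" using x(1) p by (simp add: divide_le_eq mult.commute)
  moreover have "p * x \<le> a + l" using \<open>x \<le> (a + l) / p\<close> p by (simp add: le_divide_eq mult.commute)
  ultimately show ?thesis by linarith
qed

lemma Rsub: assumes p: "1 < p" and al: "(a, l) \<in> cantor_level p n" and x: "a / p + 1 - 1/p \<le> x" "x \<le> a / p + 1 - 1/p + l / p"
  shows "1 - 1/p \<le> x \<and> a \<le> p * x - (p - 1) \<and> p * x - (p - 1) \<le> a + l"
proof -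
  have pr: "l = 1 / p ^ n \<and> 0 \<le> a \<and> a + l \<le> 1" using cl_props[OF p al] .
  have e: "p * x - (p - 1) = p * (x - (1 - 1/p))" using p by (simp add: field_simps)
  have h: "a / p \<le> x - (1 - 1/p)" "x - (1 - 1/p) \<le> a / p + l / p" using x by auto
  have L: "a \<le> p * (x - (1 - 1/p)) \<and> p * (x - (1 - 1/p)) \<le> a + l" using Lsub[OF p al h] by simp
  have "0 \<le> a / p" using pr p by simp
  hence "1 - 1/p \<le> x" using x(1) by linarith
  thus ?thesis using L e by simp
qed

lemma cantor_shift:
  assumes p: "2 < p" and x: "x \<in> cantor_set p"
  shows "(x \<le> 1/p \<and> p * x \<in> cantor_set p) \<or> (1 - 1/p \<le> x \<and> p * x - (p - 1) \<in> cantor_set p)"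
proof -
  have p0: "p \<noteq> 0" "1 < p" "0 < p" using p by auto
  have lev: "\<exists>(a, l)\<in>Lm p ` cantor_level p n \<union> Rm p ` cantor_level p n. a \<le> x \<and> x \<le> a + l" for n
    using x unfolding in_cantor by (metis cl_alt[OF p0(1)])
  have sep: "1/p < 1 - 1/p" using p by (simp add: field_simps)
  have cases: "(x \<le> 1/p \<and> (\<exists>(a, l)\<in>cantor_level p n. a \<le> p * x \<and> p * x \<le> a + l)) \<or>
      (1 - 1/p \<le> x \<and> (\<exists>(a, l)\<in>cantor_level p n. a \<le> p * x - (p - 1) \<and> p * x - (p - 1) \<le> a + l))" for n
  proof -
    from lev[of n] obtain z where z: "z \<in> Lm p ` cantor_level p n \<union> Rm p ` cantor_level p n" "fst z \<le> x" "x \<le> fst z + snd z"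
      by (auto simp: case_prod_beta)
    define a' l' where "a' = fst z" "l' = snd z"
    have al': "(a', l') \<in> Lm p ` cantor_level p n \<union> Rm p ` cantor_level p n" "a' \<le> x" "x \<le> a' + l'"
      using z by (auto simp: a'_l'_def)
    from al'(1) show ?thesis
    proof (elim UnE imageE)
      fix y assume y: "(a', l') = Lm p y" "y \<in> cantor_level p n"
      obtain a l where yy: "y = (a, l)" by (cases y)
      have "a' = a / p" "l' = l / p" using y yy by (auto simp: Lm_def)
      thus ?thesis using Lsub[OF p0(2), of a l n x] y yy al' by auto
    next
      fix y assume y: "(a', l') = Rm p y" "y \<in> cantor_level p n"
      obtain a l where yy: "y = (a, l)" by (cases y)
      have "a' = a / p + 1 - 1/p" "l' = l / p" using y yy by (auto simp: Rm_def)
      thus ?thesis using Rsub[OF p0(2), of a l n x] y yy al' by auto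
    qed
  qed
  show ?thesis
  proof (cases "x \<le> 1/p")
    case True
    hence "\<not> 1 - 1/p \<le> x" using sep by simp
    hence "\<forall>n. \<exists>(a, l)\<in>cantor_level p n. a \<le> p * x \<and> p * x \<le> a + l" using cases by blast
    thus ?thesis using True by (simp add: in_cantor)
  next
    case False
    hence "\<forall>n. 1 - 1/p \<le> x \<and> (\<exists>(a, l)\<in>cantor_level p n. a \<le> p * x - (p - 1) \<and> p * x - (p - 1) \<le> a + l)"
      using cases by blast
    thus ?thesis by (auto simp: in_cantor)
  qed
qed

lemma bsum_head: assumes p: "1 < p"
  shows "bsum p b = (if b 0 then (p - 1) / p else 0) + bsum p (\<lambda>j. b (Suc j)) / p"
proof -
  have "bsum p b = (\<Sum>i<1. bt p b i) + (\<Sum>j. bt p b (j + 1))" by (rule bsum_split[OF p])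
  also have "(\<lambda>j. bt p b (j + 1)) = (\<lambda>j. bt p (\<lambda>j. b (Suc j)) j / p)"
    by (rule ext) (simp add: bt_def wt_def)
  also have "(\<Sum>j. bt p (\<lambda>j. b (Suc j)) j / p) = bsum p (\<lambda>j. b (Suc j)) / p"
    unfolding bsum_def by (rule suminf_divide[OF bt_summable0[OF p]])
  finally show ?thesis by (simp add: bt_def wt_def)
qed

lemma bsum_in: assumes p: "2 < p" shows "bsum p b \<in> cantor_set p"
proof -
  have p0: "p \<noteq> 0" "1 < p" "0 < p" using p by auto
  have "\<forall>b. \<exists>(a, l)\<in>cantor_level p n. a \<le> bsum p b \<and> bsum p b \<le> a + l" for n
  proof (induction n)
    case 0
    then show ?case using bsum_bounds[OF p0(2)] by auto
  next
    case (Suc n)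
    show ?case
    proof
      fix b
      have "\<exists>z\<in>cantor_level p n. fst z \<le> bsum p (\<lambda>j. b (Suc j)) \<and> bsum p (\<lambda>j. b (Suc j)) \<le> fst z + snd z"
        using spec[OF Suc.IH, of "\<lambda>j. b (Suc j)"] by (simp add: case_prod_beta)
      then obtain z where z: "z \<in> cantor_level p n" "fst z \<le> bsum p (\<lambda>j. b (Suc j))"
          "bsum p (\<lambda>j. b (Suc j)) \<le> fst z + snd z"
        by blast
      obtain a l where al: "(a, l) \<in> cantor_level p n" "a \<le> bsum p (\<lambda>j. b (Suc j))" "bsum p (\<lambda>j. b (Suc j)) \<le> a + l"
        using z by (cases z) auto
      have d1: "a / p \<le> bsum p (\<lambda>j. b (Suc j)) / p" "bsum p (\<lambda>j. b (Suc j)) / p \<le> a / p + l / p"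
        using al p0 by (auto simp: divide_right_mono add_divide_distrib[symmetric])
      show "\<exists>(a, l)\<in>cantor_level p (Suc n). a \<le> bsum p b \<and> bsum p b \<le> a + l"
      proof (cases "b 0")
        case True
        have "Rm p (a, l) \<in> cantor_level p (Suc n)" using al(1) cl_alt[OF p0(1)] by auto
        moreover have "(p - 1) / p = 1 - 1/p" using p0 by (simp add: field_simps)
        ultimately show ?thesis using bsum_head[OF p0(2), of b] True d1
          by (intro bexI[of _ "Rm p (a, l)"]) (auto simp: Rm_def)
      next
        case False
        have "Lm p (a, l) \<in> cantor_level p (Suc n)" using al(1) cl_alt[OF p0(1)] by auto
        then show ?thesis using bsum_head[OF p0(2), of b] False d1
          by (intro bexI[of _ "Lm p (a, l)"]) (auto simp: Lm_def)
      qed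
    qed
  qed
  thus ?thesis by (simp add: in_cantor)
qed

lemma decode_step:
  assumes p: "2 < p" and y: "y \<in> cantor_set p"
  shows "(y \<le> 1/p \<longrightarrow> p * y \<in> cantor_set p) \<and> (\<not> y \<le> 1/p \<longrightarrow> p * y - (p - 1) \<in> cantor_set p)"
proof -
  have sep: "1/p < 1 - 1/p" using p by (simp add: field_simps)
  from cantor_shift[OF p y] show ?thesis
  proof (elim disjE)
    assume a: "y \<le> 1/p \<and> p * y \<in> cantor_set p"
    thus ?thesis by simp
  next
    assume a: "1 - 1/p \<le> y \<and> p * y - (p - 1) \<in> cantor_set p"
    hence "\<not> y \<le> 1/p" using sep by linarith
    thus ?thesis using a by simp
  qed
qed

lemma inv_pow_lim: "1 < p \<Longrightarrow> (\<lambda>j. 1 / p ^ j :: real) \<longlonglongrightarrow> 0"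
proof -
  assume p: "1 < p"
  have "(\<lambda>j. (1/p) ^ j) \<longlonglongrightarrow> 0" using p by (intro LIMSEQ_power_zero) auto
  moreover have "(\<lambda>j. (1/p) ^ j) = (\<lambda>j. 1 / p ^ j)" by (rule ext) (simp add: power_divide)
  ultimately show ?thesis by simp
qed

lemma decode: assumes p: "2 < p" and x: "x \<in> cantor_set p" shows "\<exists>b. bsum p b = x"
proof -
  have p0: "p \<noteq> 0" "1 < p" "0 < p" using p by auto
  define T where "T y = (if y \<le> 1/p then p * y else p * y - (p - 1))" for y
  define b where "b j = (1/p < (T ^^ j) x)" for j
  have inv: "(T ^^ j) x \<in> cantor_set p \<and> x = (\<Sum>i<j. bt p b i) + (T ^^ j) x / p ^ j" for j
  proof (induction j)
    case 0
    then show ?case using x by simp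
  next
    case (Suc j)
    define y where "y = (T ^^ j) x"
    have y: "y \<in> cantor_set p" "x = (\<Sum>i<j. bt p b i) + y / p ^ j" using Suc.IH by (auto simp: y_def)
    have Ty: "(T ^^ Suc j) x = T y" by (simp add: y_def)
    have st: "(y \<le> 1/p \<longrightarrow> p * y \<in> cantor_set p) \<and> (\<not> y \<le> 1/p \<longrightarrow> p * y - (p - 1) \<in> cantor_set p)"
      by (rule decode_step[OF p y(1)])
    show ?case
    proof (cases "y \<le> 1/p")
      case True
      have h1: "(T ^^ Suc j) x = p * y" using Ty True by (simp add: T_def)
      have h2: "\<not> b j" using True unfolding b_def y_def[symmetric] by simp
      have h3: "(\<Sum>i<Suc j. bt p b i) = (\<Sum>i<j. bt p b i)" using h2 by (simp add: bt_def)
      have h4: "p * y / p ^ Suc j = y / p ^ j" using p0 by simp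
      show ?thesis using h1 h3 h4 y st True by simp
    next
      case False
      have h1: "(T ^^ Suc j) x = p * y - (p - 1)" using Ty False by (simp add: T_def)
      have h2: "b j" using False unfolding b_def y_def[symmetric] by simp
      have h3: "(\<Sum>i<Suc j. bt p b i) = (\<Sum>i<j. bt p b i) + (p - 1) / p ^ Suc j"
        using h2 by (simp add: bt_def wt_def)
      have h4: "(p * y - (p - 1)) / p ^ Suc j = y / p ^ j - (p - 1) / p ^ Suc j"
        using p0 by (simp add: diff_divide_distrib)
      show ?thesis using h1 h3 h4 y st False by simp
    qed
  qed
  have bnd: "norm ((\<Sum>i<j. bt p b i) - x) \<le> 1 / p ^ j" for j
  proof -
    have c: "(T ^^ j) x \<in> cantor_set p" using inv by blast
    have "0 \<le> (T ^^ j) x" "(T ^^ j) x \<le> 1" using cantor_01[OF c] by auto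
    hence "0 \<le> (T ^^ j) x / p ^ j" "(T ^^ j) x / p ^ j \<le> 1 / p ^ j"
      using p0 by (auto intro: divide_right_mono)
    thus ?thesis using inv[of j] by simp
  qed
  have "(\<lambda>j. (\<Sum>i<j. bt p b i) - x) \<longlonglongrightarrow> 0"
  proof (rule Lim_null_comparison)
    show "\<forall>\<^sub>F j in sequentially. norm ((\<Sum>i<j. bt p b i) - x) \<le> 1 / p ^ j"
      by (intro always_eventually allI bnd)
    show "(\<lambda>j. 1 / p ^ j) \<longlonglongrightarrow> 0" by (rule inv_pow_lim[OF p0(2)])
  qed
  hence "(\<lambda>j. (\<Sum>i<j. bt p b i)) \<longlonglongrightarrow> x" by (simp add: LIM_zero_iff)
  hence "bt p b sums x" by (simp add: sums_def)
  thus ?thesis unfolding bsum_def by (auto simp: sums_iff)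
qed

fun bv :: "nat \<Rightarrow> nat \<Rightarrow> nat \<Rightarrow> bool" where
  "bv 0 n i = False"
| "bv (Suc m) n 0 = (2 ^ m \<le> n)"
| "bv (Suc m) n (Suc i) = bv m (n mod 2 ^ m) i"

lemma bv_first: "n < n' \<Longrightarrow> n' < 2 ^ m \<Longrightarrow> \<exists>i<m. (\<forall>j<i. bv m n j = bv m n' j) \<and> \<not> bv m n i \<and> bv m n' i"
proof (induction m arbitrary: n n')
  case 0
  then show ?case by simp
next
  case (Suc m)
  show ?case
  proof (cases "n' < 2 ^ m")
    case True
    obtain i where i: "i < m" "\<forall>j<i. bv m n j = bv m n' j" "\<not> bv m n i" "bv m n' i"
      using Suc.IH[OF Suc.prems(1) True] by blast
    have "\<forall>j<Suc i. bv (Suc m) n j = bv (Suc m) n' j"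
    proof (intro allI impI)
      fix j assume "j < Suc i"
      thus "bv (Suc m) n j = bv (Suc m) n' j" using i True Suc.prems by (cases j) auto
    qed
    thus ?thesis using i True Suc.prems by (intro exI[of _ "Suc i"]) auto
  next
    case False
    show ?thesis
    proof (cases "2 ^ m \<le> n")
      case True
      have "n mod 2 ^ m = n - 2 ^ m" "n' mod 2 ^ m = n' - 2 ^ m" using True False Suc.prems
        by (auto simp: le_mod_geq)
      moreover have "n - 2 ^ m < n' - 2 ^ m" "n' - 2 ^ m < 2 ^ m" using True False Suc.prems by auto
      ultimately obtain i where i: "i < m" "\<forall>j<i. bv m (n mod 2^m) j = bv m (n' mod 2^m) j"
          "\<not> bv m (n mod 2^m) i" "bv m (n' mod 2^m) i"
        using Suc.IH[of "n - 2^m" "n' - 2^m"] by auto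
      have "\<forall>j<Suc i. bv (Suc m) n j = bv (Suc m) n' j"
      proof (intro allI impI)
        fix j assume "j < Suc i"
        thus "bv (Suc m) n j = bv (Suc m) n' j" using i True False by (cases j) auto
      qed
      thus ?thesis using i by (intro exI[of _ "Suc i"]) auto
    next
      case False2: False
      thus ?thesis using False by (intro exI[of _ 0]) auto
    qed
  qed
qed

fun num :: "nat \<Rightarrow> (nat \<Rightarrow> bool) \<Rightarrow> nat" where
  "num 0 f = 0"
| "num (Suc m) f = (if f 0 then 2 ^ m else 0) + num m (\<lambda>i. f (Suc i))"

lemma num_lt: "num m f < 2 ^ m"
proof (induction m arbitrary: f)
  case (Suc m)
  have "num m (\<lambda>i. f (Suc i)) < 2 ^ m" by (rule Suc.IH)
  thus ?case by simp
qed simp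

lemma num_mono: "i < m \<Longrightarrow> \<forall>j<i. f j = f' j \<Longrightarrow> \<not> f i \<Longrightarrow> f' i \<Longrightarrow> num m f < num m f'"
proof (induction m arbitrary: f f' i)
  case 0
  then show ?case by simp
next
  case (Suc m)
  show ?case
  proof (cases i)
    case 0
    then show ?thesis using Suc.prems num_lt[of m "\<lambda>i. f (Suc i)"] by simp
  next
    case (Suc i')
    have "num m (\<lambda>i. f (Suc i)) < num m (\<lambda>i. f' (Suc i))"
      using Suc.IH[of i' "\<lambda>i. f (Suc i)" "\<lambda>i. f' (Suc i)"] Suc.prems Suc by auto
    moreover have "f 0 = f' 0" using Suc.prems Suc by auto
    ultimately show ?thesis by simp
  qed
qed

lemma cantor_zero: "2 < p \<Longrightarrow> 0 \<in> cantor_set p"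
proof -
  assume p: "2 < p"
  have "bt p (\<lambda>_. False) = (\<lambda>_. 0)" by (rule ext) (simp add: bt_def)
  thus ?thesis using bsum_in[OF p, of "\<lambda>_. False"] by (simp add: bsum_def)
qed

lemma pow_conv: fixes p t :: real assumes "0 < p" shows "(1 / p ^ k) powr t = 1 / (p powr t) ^ k"
proof -
  have "(p ^ k) powr t = (p powr real k) powr t" using assms by (simp add: powr_realpow)
  also have "\<dots> = p powr (real k * t)" by (simp add: powr_powr)
  also have "\<dots> = (p powr t) ^ k" using assms by (simp add: powr_power)
  finally show ?thesis using assms by (simp add: powr_divide)
qed

lemma dim_le:
  assumes p: "2 < p" and R: "areg (cantor_set p) t \<mu> c C"
  shows "p powr t \<le> 2"
proof (rule ccontr)
  interpret areg "cantor_set p" t \<mu> c C by fact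
  assume "\<not> p powr t \<le> 2" hence gt: "2 < p powr t" by simp
  have p0: "0 < p" "1 < p" using p by auto
  obtain z0 where z0: "z0 \<in> cantor_set p" using ne by auto
  have key: "c * d powr t \<le> C * (2 / p powr t) ^ k" for k
  proof -
    define L where "L = {I \<in> cantor_level p k. \<exists>z\<in>cantor_set p. fst I \<le> z \<and> z \<le> fst I + snd I}"
    define pt where "pt I = (SOME z. z \<in> cantor_set p \<and> fst I \<le> z \<and> z \<le> fst I + snd I)" for I
    have finL: "finite L" "card L \<le> 2 ^ k"
    proof -
      have "L \<subseteq> cantor_level p k" by (auto simp: L_def)
      thus "finite L" "card L \<le> 2 ^ k" using cl_finite[of p k] card_mono[of "cantor_level p k" L]
        by (auto intro: finite_subset)
    qed
    have ptI: "pt I \<in> cantor_set p \<and> fst I \<le> pt I \<and> pt I \<le> fst I + snd I" if "I \<in> L" for I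
    proof -
      have "\<exists>z. z \<in> cantor_set p \<and> fst I \<le> z \<and> z \<le> fst I + snd I" using that by (auto simp: L_def)
      thus ?thesis unfolding pt_def by (rule someI_ex)
    qed
    have cov: "cball z0 d \<inter> cantor_set p \<subseteq> (\<Union>I\<in>L. cball (pt I) (1 / p ^ k))"
    proof
      fix x assume x: "x \<in> cball z0 d \<inter> cantor_set p"
      hence "\<exists>(a, l)\<in>cantor_level p k. a \<le> x \<and> x \<le> a + l" by (auto simp: in_cantor)
      then obtain I where I: "I \<in> cantor_level p k" "fst I \<le> x" "x \<le> fst I + snd I"
        by (auto simp: case_prod_beta)
      have l: "snd I = 1 / p ^ k" using cl_props[OF p0(2), of "fst I" "snd I" k] I(1) by simp
      have IL: "I \<in> L" using I x by (auto simp: L_def)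
      have "\<bar>x - pt I\<bar> \<le> snd I" using ptI[OF IL] I by (auto simp: abs_if)
      hence "x \<in> cball (pt I) (1 / p ^ k)" using l by (simp add: dist_real_def abs_minus_commute)
      thus "x \<in> (\<Union>I\<in>L. cball (pt I) (1 / p ^ k))" using IL by blast
    qed
    have "ennreal (c * d powr t) \<le> emeasure \<mu> (cball z0 d)" by (rule lower[OF z0 dpos order_refl])
    also have "\<dots> \<le> ennreal (real (card L) * (C * (1 / p ^ k) powr t))"
      by (rule covering[OF finL(1) _ cov]) (use ptI p0 in auto)
    finally have "c * d powr t \<le> real (card L) * (C * (1 / p ^ k) powr t)"
      using Cpos by (subst (asm) ennreal_le_iff) auto
    also have "\<dots> \<le> 2 ^ k * (C * (1 / p ^ k) powr t)"
      using finL(2) Cpos by (intro mult_right_mono) (auto simp flip: of_nat_le_iff)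
    also have "\<dots> = C * (2 / p powr t) ^ k"
      using p0 by (simp add: pow_conv power_divide)
    finally show ?thesis .
  qed
  have pos: "0 < c * d powr t / C" using cpos Cpos dpos by simp
  have lt1: "2 / p powr t < 1" using gt by (simp add: divide_less_eq)
  obtain k where k: "(2 / p powr t) ^ k < c * d powr t / C"
    using real_arch_pow_inv[OF pos lt1] by blast
  hence "C * (2 / p powr t) ^ k < c * d powr t" using Cpos by (simp add: field_simps)
  thus False using key[of k] by simp
qed

lemma dim_ge:
  assumes p: "2 < p" and R: "areg (cantor_set p) t \<mu> c C"
  shows "2 \<le> p powr t"
proof (rule ccontr)
  interpret areg "cantor_set p" t \<mu> c C by fact
  assume "\<not> 2 \<le> p powr t" hence lt: "p powr t < 2" by simp
  have p0: "0 < p" "1 < p" using p by auto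
  have pt0: "0 < p powr t" using p0 by simp
  define pts where "pts k n = bsum p (\<lambda>i. i < k \<and> bv k n i)" for k n
  have sepY: "(p - 2) / p ^ k \<le> pts k n' - pts k n" if nn: "n < n'" "n' < 2 ^ k" for k n n'
  proof -
    obtain i where i: "i < k" "\<forall>j<i. bv k n j = bv k n' j" "\<not> bv k n i" "bv k n' i"
      using bv_first[OF nn] by blast
    have "(p - 2) / p ^ Suc i \<le> pts k n' - pts k n"
      unfolding pts_def by (rule conjunct1[OF bsum_dist[OF p]]) (use i in auto)
    moreover have "(p - 2) / p ^ k \<le> (p - 2) / p ^ Suc i"
      using p i by (intro divide_left_mono power_increasing) auto
    ultimately show ?thesis by simp
  qed
  have key: "real (2 ^ k) * (c * ((p - 2) / p ^ k / 3) powr t) \<le> C * 2 powr t"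
    if k: "1 \<le> k" "(p - 2) / p ^ k \<le> 3 * d" for k
  proof -
    define \<delta> where "\<delta> = (p - 2) / p ^ k"
    have \<delta>0: "0 < \<delta>" using p by (simp add: \<delta>_def)
    have "p \<le> p ^ k" using p0 k(1) by (metis power_one_right power_increasing less_imp_le)
    hence \<delta>1: "\<delta> \<le> 1" using p0 by (simp add: \<delta>_def divide_le_eq)
    have inj: "inj_on (pts k) {..<2 ^ k}"
    proof (rule inj_onI)
      fix n n' assume nn: "n \<in> {..<2 ^ k}" "n' \<in> {..<2 ^ k}" "pts k n = pts k n'"
      show "n = n'"
      proof (rule ccontr)
        assume "n \<noteq> n'"
        hence "n < n' \<or> n' < n" by auto
        thus False using sepY[of n n' k] sepY[of n' n k] nn \<delta>0 unfolding \<delta>_def by auto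
      qed
    qed
    define Y where "Y = pts k ` {..<2 ^ k}"
    have cardY: "card Y = 2 ^ k" using inj by (simp add: Y_def card_image)
    have Ysub: "Y \<subseteq> cantor_set p" using bsum_in[OF p] by (auto simp: Y_def pts_def)
    have Ybnd: "\<forall>y\<in>Y. \<bar>y - 0\<bar> \<le> 1" using bsum_bounds[OF p0(2)] by (auto simp: Y_def pts_def)
    have Ysep: "\<forall>y\<in>Y. \<forall>y'\<in>Y. y \<noteq> y' \<longrightarrow> \<delta> \<le> \<bar>y - y'\<bar>"
    proof (intro ballI impI)
      fix y y' assume yy: "y \<in> Y" "y' \<in> Y" "y \<noteq> y'"
      then obtain n n' where nn: "n < 2 ^ k" "n' < 2 ^ k" "y = pts k n" "y' = pts k n'"
        by (auto simp: Y_def)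
      have "n \<noteq> n'" using yy nn by auto
      hence "n < n' \<or> n' < n" by arith
      thus "\<delta> \<le> \<bar>y - y'\<bar>" using sepY[of n n' k] sepY[of n' n k] nn unfolding \<delta>_def by auto
    qed
    have "real (card Y) * (c * (\<delta>/3) powr t) \<le> C * (1 + \<delta>/3) powr t"
      by (rule packing[OF _ Ysub cantor_zero[OF p] Ybnd Ysep \<delta>0]) (use k(2) in \<open>auto simp: Y_def \<delta>_def\<close>)
    also have "\<dots> \<le> C * 2 powr t"
      using \<delta>1 \<delta>0 Cpos s_nonneg by (intro mult_left_mono powr_mono2) auto
    finally show ?thesis using cardY by (simp add: \<delta>_def)
  qed
  define M where "M = C * 2 powr t / (c * ((p - 2) / 3) powr t)"
  have Mpos: "0 < c * ((p - 2) / 3) powr t" using cpos p by simp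
  have g: "1 < 2 / p powr t" using lt pt0 by simp
  obtain k1 where k1: "M < (2 / p powr t) ^ k1" using real_arch_pow[OF g] by blast
  have pos3: "0 < 3 * d / (p - 2)" using dpos p by simp
  obtain k2 where k2: "(1 / p) ^ k2 < 3 * d / (p - 2)" using real_arch_pow_inv[OF pos3, of "1/p"] p0 by auto
  define k where "k = max 1 (max k1 k2)"
  have "(1 / p) ^ k \<le> (1 / p) ^ k2" using p0 by (intro power_decreasing) (auto simp: k_def)
  hence "(p - 2) * (1 / p) ^ k \<le> (p - 2) * (1 / p) ^ k2" using p by (intro mult_left_mono) auto
  also have "\<dots> < (p - 2) * (3 * d / (p - 2))" using k2 p by (intro mult_strict_left_mono) auto
  also have "\<dots> = 3 * d" using p by simp
  finally have kd: "(p - 2) / p ^ k \<le> 3 * d" by (simp add: power_divide)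
  have "(2 / p powr t) ^ k1 \<le> (2 / p powr t) ^ k" using g by (intro power_increasing) (auto simp: k_def)
  hence Mk: "M < (2 / p powr t) ^ k" using k1 by simp
  have e1: "(p - 2) / p ^ k / 3 = ((p - 2)/3) * (1 / p ^ k)" by simp
  have e2: "((p - 2) / p ^ k / 3) powr t = ((p - 2) / 3) powr t * (1 / (p powr t) ^ k)"
    unfolding e1 using p by (subst powr_mult) (auto simp: pow_conv)
  have eq: "real (2 ^ k) * (c * ((p - 2) / p ^ k / 3) powr t) = (c * ((p - 2) / 3) powr t) * (2 / p powr t) ^ k"
    unfolding e2 by (simp add: power_divide)
  have "(c * ((p - 2) / 3) powr t) * (2 / p powr t) ^ k \<le> C * 2 powr t"
    using key[of k] kd eq by (simp only: k_def) auto
  moreover have "C * 2 powr t < (c * ((p - 2) / 3) powr t) * (2 / p powr t) ^ k"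
    using Mk Mpos unfolding M_def by (simp add: field_simps)
  ultimately show False by simp
qed

lemma dim_eq: "2 < p \<Longrightarrow> areg (cantor_set p) t \<mu> c C \<Longrightarrow> p powr t = 2"
  using dim_le dim_ge by (meson antisym)

locale cB = areg E s \<kappa> c C for E s \<kappa> c C +
  fixes q :: real and m n0 :: nat
  assumes q: "2 < q" and sq: "q powr s < 2" and s1: "s < 1"
    and n0: "1 \<le> n0" "(C / c) * 9 powr s < real n0 powr (1 - s)"
    and m: "1 \<le> m" "(C / c) * (6 * (3 * real n0)) powr s \<le> (2 / q powr s) ^ m"
begin

definition "A = 3 * real n0"
definition "Lam = q ^ m"
definition eps :: "nat \<Rightarrow> real" where "eps k = 2 * d / Lam ^ k"
definition ch :: "real \<Rightarrow> real \<Rightarrow> real \<Rightarrow> bool" where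
  "ch \<epsilon> x y \<longleftrightarrow> (\<forall>a b. min x y \<le> a \<and> b \<le> max x y \<and> \<epsilon> \<le> b - a \<longrightarrow> (\<exists>e\<in>E. a < e \<and> e < b))"

lemma A_ge: "3 \<le> A" using n0 by (simp add: A_def)
lemma Lam_gt: "2 < Lam"
proof -
  have "q ^ 1 \<le> q ^ m" using q m by (intro power_increasing) auto
  thus ?thesis using q by (simp add: Lam_def)
qed
lemma eps_pos: "0 < eps k" using dpos Lam_gt by (simp add: eps_def)
lemma eps_Suc: "eps (Suc k) = eps k / Lam" by (simp add: eps_def field_simps)
lemma eps_le: "eps (Suc k) \<le> eps k" using eps_pos[of k] Lam_gt by (simp add: eps_Suc divide_le_eq)
lemma eps_0: "eps 0 = 2 * d" by (simp add: eps_def)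

lemma porosity:
  assumes x: "x \<in> E" and r: "0 < r" "r \<le> d"
  shows "\<exists>a b. x \<le> a \<and> b \<le> x + r \<and> r / (3 * n0) \<le> b - a \<and> (\<forall>e\<in>E. \<not> (a < e \<and> e < b))"
proof (rule ccontr)
  assume H: "\<not> ?thesis"
  have n0p: "0 < real n0" using n0 by simp
  define a where "a i = x + real i * r / n0" for i :: nat
  have ex: "\<exists>e. i < n0 \<longrightarrow> e \<in> E \<and> a i < e \<and> e < a i + r / (3 * n0)" for i
  proof (cases "i < n0")
    case True
    have "real i + 1/3 \<le> real n0" using True by linarith
    hence "(real i + 1/3) * (r / n0) \<le> real n0 * (r / n0)" using r n0p by (intro mult_right_mono) auto
    hence "a i + r / (3 * n0) \<le> x + r" using n0p by (simp add: a_def field_simps)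
    moreover have "x \<le> a i" using r n0p by (simp add: a_def)
    ultimately show ?thesis using H by force
  qed simp
  then obtain e where e: "\<And>i. i < n0 \<Longrightarrow> e i \<in> E \<and> a i < e i \<and> e i < a i + r / (3 * n0)"
    by metis
  define \<delta> where "\<delta> = 2 * r / (3 * n0)"
  have \<delta>0: "0 < \<delta>" using r n0p by (simp add: \<delta>_def)
  have sep: "\<delta> \<le> e i' - e i" if "i < i'" "i' < n0" for i i'
  proof -
    have "real i + 1 \<le> real i'" using that by simp
    hence "(real i + 1) * (r / n0) \<le> real i' * (r / n0)" using r n0p by (intro mult_right_mono) auto
    hence "a i + r / n0 \<le> a i'" by (simp add: a_def algebra_simps add_divide_distrib)
    moreover have "r / n0 - r / (3 * n0) = \<delta>" by (simp add: \<delta>_def field_simps)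
    ultimately show ?thesis using e[of i] e[of i'] that by linarith
  qed
  have inj: "inj_on e {..<n0}"
  proof (rule inj_onI)
    fix i i' assume ii: "i \<in> {..<n0}" "i' \<in> {..<n0}" "e i = e i'"
    show "i = i'"
    proof (rule ccontr)
      assume "i \<noteq> i'" hence "i < i' \<or> i' < i" by arith
      thus False using sep[of i i'] sep[of i' i] ii \<delta>0 by auto
    qed
  qed
  define Y where "Y = e ` {..<n0}"
  have cardY: "card Y = n0" using inj by (simp add: Y_def card_image)
  have YE: "Y \<subseteq> E" using e by (auto simp: Y_def)
  have Yb: "\<forall>y\<in>Y. \<bar>y - x\<bar> \<le> r"
  proof
    fix y assume "y \<in> Y" then obtain i where i: "i < n0" "y = e i" by (auto simp: Y_def)
    have "real i + 1/3 \<le> real n0" using i by linarith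
    hence "(real i + 1/3) * (r / n0) \<le> real n0 * (r / n0)" using r n0p by (intro mult_right_mono) auto
    hence "a i + r / (3 * n0) \<le> x + r" using n0p by (simp add: a_def field_simps)
    moreover have "x \<le> a i" using r n0p by (simp add: a_def)
    ultimately show "\<bar>y - x\<bar> \<le> r" using e[OF i(1)] i by auto
  qed
  have Ys: "\<forall>y\<in>Y. \<forall>y'\<in>Y. y \<noteq> y' \<longrightarrow> \<delta> \<le> \<bar>y - y'\<bar>"
  proof (intro ballI impI)
    fix y y' assume yy: "y \<in> Y" "y' \<in> Y" "y \<noteq> y'"
    then obtain i i' where ii: "i < n0" "i' < n0" "y = e i" "y' = e i'" by (auto simp: Y_def)
    hence "i \<noteq> i'" using yy by auto
    hence "i < i' \<or> i' < i" by arith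
    thus "\<delta> \<le> \<bar>y - y'\<bar>" using sep[of i i'] sep[of i' i] ii by auto
  qed
  have \<delta>r: "\<delta> \<le> r" using r n0 by (simp add: \<delta>_def field_simps)
  have "real (card Y) * (c * (\<delta>/3) powr s) \<le> C * (r + \<delta>/3) powr s"
    by (rule packing[OF _ YE x Yb Ys \<delta>0]) (use \<delta>r r in \<open>auto simp: Y_def\<close>)
  also have "\<dots> \<le> C * (2 * r) powr s"
    using \<delta>r \<delta>0 r Cpos s_nonneg by (intro mult_left_mono powr_mono2) auto
  finally have ineq: "real n0 * (c * (\<delta>/3) powr s) \<le> C * (2 * r) powr s" using cardY by simp
  have e3: "\<delta> / 3 = (2 * r) / (9 * n0)" by (simp add: \<delta>_def field_simps)
  have "(\<delta>/3) powr s = (2 * r) powr s / (9 powr s * real n0 powr s)"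
    unfolding e3 using r n0p by (simp add: powr_divide powr_mult)
  hence "real n0 * c * (2 * r) powr s / (9 powr s * real n0 powr s) \<le> C * (2 * r) powr s"
    using ineq by (simp add: mult.assoc)
  moreover have "0 < (2 * r) powr s" "0 < 9 powr s * real n0 powr s" using r n0p by auto
  ultimately have "real n0 * c \<le> C * (9 powr s * real n0 powr s)"
    by (simp add: divide_le_eq mult.commute mult.left_commute)
  hence "real n0 / real n0 powr s \<le> (C / c) * 9 powr s"
    using cpos n0p by (simp add: field_simps)
  moreover have "real n0 / real n0 powr s = real n0 powr (1 - s)"
    using n0p by (simp add: powr_diff)
  ultimately show False using n0(2) by simp
qed

lemma ch_sym: "ch \<epsilon> x y = ch \<epsilon> y x"
  unfolding ch_def by (simp add: min.commute max.commute)

lemma ch_sub: assumes h: "ch \<epsilon> u v" and l: "min u v \<le> min x y" "max x y \<le> max u v" shows "ch \<epsilon> x y"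
  unfolding ch_def
proof (intro allI impI)
  fix a b assume ab: "min x y \<le> a \<and> b \<le> max x y \<and> \<epsilon> \<le> b - a"
  hence "min u v \<le> a \<and> b \<le> max u v \<and> \<epsilon> \<le> b - a" using l by linarith
  thus "\<exists>e\<in>E. a < e \<and> e < b" using h unfolding ch_def by blast
qed

lemma ch_pos: assumes h: "ch \<epsilon> x y" shows "0 < \<epsilon>"
proof (rule ccontr)
  assume "\<not> 0 < \<epsilon>"
  hence "min x y \<le> min x y \<and> min x y \<le> max x y \<and> \<epsilon> \<le> min x y - min x y" by simp
  hence "\<exists>e\<in>E. min x y < e \<and> e < min x y" using h unfolding ch_def by blast
  thus False by auto
qed

lemma ch_refl: "0 < \<epsilon> \<Longrightarrow> ch \<epsilon> x x"
  unfolding ch_def by auto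

lemma ch_near: assumes "\<bar>x - y\<bar> < \<epsilon>" shows "ch \<epsilon> x y"
  unfolding ch_def
proof (intro allI impI)
  fix a b assume ab: "min x y \<le> a \<and> b \<le> max x y \<and> \<epsilon> \<le> b - a"
  have "max x y - min x y = \<bar>x - y\<bar>" by (simp add: max_def min_def abs_if)
  hence False using ab assms by linarith
  thus "\<exists>e\<in>E. a < e \<and> e < b" ..
qed

lemma ch_far: "\<not> ch \<epsilon> x y \<Longrightarrow> \<epsilon> \<le> \<bar>x - y\<bar>"
  using ch_near by (meson not_less)

lemma ch_mono: assumes le: "\<epsilon> \<le> \<epsilon>'" and h: "ch \<epsilon> x y" shows "ch \<epsilon>' x y"
  unfolding ch_def
proof (intro allI impI)
  fix a b assume ab: "min x y \<le> a \<and> b \<le> max x y \<and> \<epsilon>' \<le> b - a"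
  hence "min x y \<le> a \<and> b \<le> max x y \<and> \<epsilon> \<le> b - a" using le by linarith
  thus "\<exists>e\<in>E. a < e \<and> e < b" using h unfolding ch_def by blast
qed

lemma ch_trans: assumes y: "y \<in> E" and h: "ch \<epsilon> x y" "ch \<epsilon> y z" shows "ch \<epsilon> x z"
  unfolding ch_def
proof (intro allI impI)
  fix a b assume ab: "min x z \<le> a \<and> b \<le> max x z \<and> \<epsilon> \<le> b - a"
  consider "a < y \<and> y < b" | "b \<le> y" | "y \<le> a" by linarith
  thus "\<exists>e\<in>E. a < e \<and> e < b"
  proof cases
    case 1 thus ?thesis using y by blast
  next
    case 2
    hence "(min x y \<le> a \<and> b \<le> max x y) \<or> (min y z \<le> a \<and> b \<le> max y z)"
      using ab by (cases "x \<le> z") (auto simp: min_def max_def)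
    thus ?thesis using h ab unfolding ch_def by blast
  next
    case 3
    hence "(min x y \<le> a \<and> b \<le> max x y) \<or> (min y z \<le> a \<and> b \<le> max y z)"
      using ab by (cases "x \<le> z") (auto simp: min_def max_def)
    thus ?thesis using h ab unfolding ch_def by blast
  qed
qed

lemma ch_diam: assumes x: "x \<in> E" and y: "y \<in> E" and h: "ch \<epsilon> x y" shows "\<bar>x - y\<bar> < A * \<epsilon>"
proof -
  have e0: "0 < \<epsilon>" using ch_pos[OF h] .
  have main: "v - u < A * \<epsilon>" if uv: "u \<in> E" "v \<in> E" "u < v" "ch \<epsilon> u v" for u v
  proof -
    have r: "0 < v - u" "v - u \<le> d" using dist_le[OF uv(2,1)] uv(3) by auto
    obtain a b where ab: "u \<le> a" "b \<le> u + (v - u)" "(v - u) / (3 * n0) \<le> b - a" "\<forall>e\<in>E. \<not> (a < e \<and> e < b)"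
      using porosity[OF uv(1) r] by blast
    have "\<not> \<epsilon> \<le> b - a"
    proof
      assume "\<epsilon> \<le> b - a"
      hence "\<exists>e\<in>E. a < e \<and> e < b" using uv(4) ab uv(3) unfolding ch_def by auto
      thus False using ab(4) by blast
    qed
    hence "(v - u) / (3 * n0) < \<epsilon>" using ab(3) by simp
    thus ?thesis using n0 by (simp add: A_def divide_less_eq mult.commute)
  qed
  consider "x < y" | "y < x" | "x = y" by linarith
  thus ?thesis
  proof cases
    case 1 thus ?thesis using main[OF x y 1 h] by simp
  next
    case 2 thus ?thesis using main[OF y x 2] h ch_sym by auto
  next
    case 3 thus ?thesis using e0 A_ge by simp
  qed
qed

end

context cB
begin

definition cls :: "nat \<Rightarrow> real \<Rightarrow> real set" where "cls k y = {z \<in> E. ch (eps k) z y}"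
definition Sx :: "nat \<Rightarrow> real \<Rightarrow> real set" where
  "Sx k x = {z \<in> E. ch (eps k) z x \<and> z < x \<and> \<not> ch (eps (Suc k)) z x}"
definition W :: "nat \<Rightarrow> real \<Rightarrow> real set set" where "W k x = cls (Suc k) ` {z \<in> E. ch (eps k) z x}"
definition idx :: "nat \<Rightarrow> real \<Rightarrow> nat" where "idx k x = card (cls (Suc k) ` Sx k x)"

lemma level0: "x \<in> E \<Longrightarrow> y \<in> E \<Longrightarrow> ch (eps 0) x y"
  using dist_le[of x y] dpos by (intro ch_near) (auto simp: eps_0)

lemma cls_eq: assumes "y \<in> E" "y' \<in> E" "ch \<epsilon> y y'" "\<epsilon> = eps k" shows "cls k y = cls k y'"
  using assms ch_trans ch_sym unfolding cls_def by blast

lemma cls_self: "y \<in> E \<Longrightarrow> y \<in> cls k y"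
  using ch_refl[OF eps_pos] by (simp add: cls_def)

lemma pow_powr: fixes p t :: real shows "0 < p \<Longrightarrow> (p ^ k) powr t = (p powr t) ^ k"
proof -
  assume p: "0 < p"
  have "(p ^ k) powr t = (p powr real k) powr t" using p by (simp add: powr_realpow)
  also have "\<dots> = p powr (real k * t)" by (simp add: powr_powr)
  also have "\<dots> = (p powr t) ^ k" using p by (simp add: powr_power)
  finally show ?thesis .
qed

lemma eps_le0: "eps k \<le> 2 * d"
proof -
  have "1 \<le> Lam ^ k" using Lam_gt by (intro one_le_power) auto
  thus ?thesis using dpos by (simp add: eps_def divide_le_eq mult_le_cancel_left1)
qed

lemma card_arith:
  assumes h: "real N * (c * (e / Lam / 3) powr s) \<le> C * (A * e + e / Lam / 3) powr s" and e: "0 < e"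
  shows "N \<le> 2 ^ m"
proof -
  have L0: "0 < Lam" using Lam_gt by simp
  have s0: "0 \<le> s" by (rule s_nonneg)
  have le1: "e / Lam / 3 \<le> A * e" using A_ge e Lam_gt by (simp add: field_simps) (smt (verit) mult_le_cancel_left1 mult_mono)
  have "(A * e + e / Lam / 3) powr s \<le> (2 * A * e) powr s"
    using le1 e L0 A_ge s0 by (intro powr_mono2) (auto simp: mult.commute)
  also have "\<dots> = (2 * A) powr s * e powr s" using A_ge e by (simp add: powr_mult)
  finally have h2: "real N * (c * (e powr s / (3 * Lam) powr s)) \<le> C * ((2 * A) powr s * e powr s)"
  proof -
    assume u: "(A * e + e / Lam / 3) powr s \<le> (2 * A) powr s * e powr s"
    have "(e / Lam / 3) powr s = e powr s / (3 * Lam) powr s" using e L0 by (simp add: powr_divide mult.commute)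
    hence "real N * (c * (e powr s / (3 * Lam) powr s)) \<le> C * (A * e + e / Lam / 3) powr s" using h by simp
    also have "\<dots> \<le> C * ((2 * A) powr s * e powr s)" using u Cpos by (intro mult_left_mono) auto
    finally show ?thesis .
  qed
  have ep: "0 < e powr s" "0 < (3 * Lam) powr s" using e L0 by auto
  have "real N * c \<le> C * (2 * A) powr s * (3 * Lam) powr s"
  proof -
    have "real N * c * e powr s / (3 * Lam) powr s \<le> C * (2 * A) powr s * e powr s"
      using h2 by (simp add: mult.assoc)
    hence "real N * c * e powr s \<le> C * (2 * A) powr s * e powr s * (3 * Lam) powr s"
      using ep by (simp add: divide_le_eq)
    hence "(real N * c) * e powr s \<le> (C * (2 * A) powr s * (3 * Lam) powr s) * e powr s"
      by (simp add: mult_ac)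
    thus ?thesis using ep by simp
  qed
  moreover have "(2 * A) powr s * (3 * Lam) powr s = (6 * A) powr s * (q powr s) ^ m"
  proof -
    have "(2 * A) powr s * (3 * Lam) powr s = (6 * A * Lam) powr s"
      using A_ge L0 by (simp add: powr_mult[symmetric] mult_ac)
    also have "\<dots> = (6 * A) powr s * Lam powr s" using A_ge L0 by (simp add: powr_mult)
    also have "Lam powr s = (q powr s) ^ m" using q by (simp add: Lam_def pow_powr)
    finally show ?thesis .
  qed
  ultimately have "real N \<le> (C / c) * (6 * A) powr s * (q powr s) ^ m"
    using cpos by (simp add: field_simps)
  also have "\<dots> \<le> (2 / q powr s) ^ m * (q powr s) ^ m"
    using m(2) by (intro mult_right_mono) (auto simp: A_def)
  also have "\<dots> = 2 ^ m" using q by (simp add: power_mult_distrib[symmetric])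
  finally show ?thesis by (simp flip: of_nat_le_iff)
qed

lemma W_bound: assumes x: "x \<in> E" shows "finite (W k x) \<and> card (W k x) \<le> 2 ^ m"
proof (rule finite_if_finite_subsets_card_bdd)
  fix G assume G: "G \<subseteq> W k x" "finite G"
  have "\<forall>D\<in>G. \<exists>z. z \<in> E \<and> ch (eps k) z x \<and> cls (Suc k) z = D" using G(1) by (auto simp: W_def)
  then obtain f where f: "\<And>D. D \<in> G \<Longrightarrow> f D \<in> E \<and> ch (eps k) (f D) x \<and> cls (Suc k) (f D) = D"
    by metis
  have inj: "inj_on f G" by (rule inj_onI) (metis f)
  define Y where "Y = f ` G"
  have cardY: "card Y = card G" using inj by (simp add: Y_def card_image)
  have YE: "Y \<subseteq> E" using f by (auto simp: Y_def)
  have Yb: "\<forall>y\<in>Y. \<bar>y - x\<bar> \<le> A * eps k"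
    using f ch_diam[OF _ x] by (force simp: Y_def intro: less_imp_le)
  have Ys: "\<forall>y\<in>Y. \<forall>y'\<in>Y. y \<noteq> y' \<longrightarrow> eps (Suc k) \<le> \<bar>y - y'\<bar>"
  proof (intro ballI impI)
    fix y y' assume yy: "y \<in> Y" "y' \<in> Y" "y \<noteq> y'"
    then obtain D D' where DD: "D \<in> G" "D' \<in> G" "y = f D" "y' = f D'" by (auto simp: Y_def)
    show "eps (Suc k) \<le> \<bar>y - y'\<bar>"
    proof (rule ch_far, rule notI)
      assume "ch (eps (Suc k)) y y'"
      hence "cls (Suc k) y = cls (Suc k) y'" using DD f by (intro cls_eq) auto
      hence "D = D'" using DD f by metis
      thus False using DD yy by simp
    qed
  qed
  have e3: "eps (Suc k) \<le> 3 * d" using eps_le0[of "Suc k"] dpos by simp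
  have pk: "real (card Y) * (c * (eps (Suc k) / 3) powr s) \<le> C * (A * eps k + eps (Suc k) / 3) powr s"
    by (rule packing[OF _ YE x Yb Ys eps_pos e3]) (use G(2) in \<open>simp add: Y_def\<close>)
  hence "card Y \<le> 2 ^ m" using eps_pos[of k] by (intro card_arith[of _ "eps k"]) (simp_all add: eps_Suc)
  thus "card G \<le> 2 ^ m" using cardY by simp
qed

end

context cB
begin

lemma img_sub_W: "cls (Suc k) ` Sx k x \<subseteq> W k x"
  by (auto simp: Sx_def W_def)

lemma self_notin: assumes x: "x \<in> E" shows "cls (Suc k) x \<notin> cls (Suc k) ` Sx k x"
proof
  assume "cls (Suc k) x \<in> cls (Suc k) ` Sx k x"
  then obtain z where z: "z \<in> Sx k x" "cls (Suc k) x = cls (Suc k) z" by auto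
  have "z \<in> cls (Suc k) z" using z(1) by (intro cls_self) (auto simp: Sx_def)
  hence "z \<in> cls (Suc k) x" using z(2) by simp
  hence "ch (eps (Suc k)) z x" by (simp add: cls_def)
  thus False using z(1) by (simp add: Sx_def)
qed

lemma self_in_W: "x \<in> E \<Longrightarrow> cls (Suc k) x \<in> W k x"
  using ch_refl[OF eps_pos] by (auto simp: W_def)

lemma idx_lt: assumes x: "x \<in> E" shows "idx k x < 2 ^ m"
proof -
  have a: "cls (Suc k) ` Sx k x \<subseteq> W k x" by (rule img_sub_W)
  have b: "cls (Suc k) ` Sx k x \<noteq> W k x" using self_notin[OF x, of k] self_in_W[OF x, of k] by metis
  have "cls (Suc k) ` Sx k x \<subset> W k x" using a b by (rule psubsetI)
  hence "card (cls (Suc k) ` Sx k x) < card (W k x)" using W_bound[OF x] by (intro psubset_card_mono) auto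
  moreover have "card (W k x) \<le> 2 ^ m" using W_bound[OF x] by blast
  ultimately show ?thesis unfolding idx_def by linarith
qed

lemma idx_eq: assumes x: "x \<in> E" and y: "y \<in> E" and xy: "x < y"
  and h1: "ch (eps k) x y" and h2: "ch (eps (Suc k)) x y"
  shows "idx k x = idx k y"
proof -
  have "Sx k x = Sx k y"
  proof (intro set_eqI iffI)
    fix z assume z: "z \<in> Sx k x"
    have zE: "z \<in> E" using z by (simp add: Sx_def)
    have "ch (eps k) z y" using z by (intro ch_trans[OF x _ h1]) (simp add: Sx_def)
    moreover have "z < y" using z xy by (simp add: Sx_def)
    moreover have "\<not> ch (eps (Suc k)) z y"
    proof
      assume a: "ch (eps (Suc k)) z y"
      have "ch (eps (Suc k)) y x" using h2 ch_sym by simp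
      hence "ch (eps (Suc k)) z x" by (rule ch_trans[OF y a])
      thus False using z by (simp add: Sx_def)
    qed
    ultimately show "z \<in> Sx k y" using zE by (simp add: Sx_def)
  next
    fix z assume z: "z \<in> Sx k y"
    have zE: "z \<in> E" using z by (simp add: Sx_def)
    have h1': "ch (eps k) y x" using h1 ch_sym by simp
    have "ch (eps k) z x" using z by (intro ch_trans[OF y _ h1']) (simp add: Sx_def)
    moreover have n: "\<not> ch (eps (Suc k)) z x"
    proof
      assume a: "ch (eps (Suc k)) z x"
      hence "ch (eps (Suc k)) z y" by (rule ch_trans[OF x _ h2])
      thus False using z by (simp add: Sx_def)
    qed
    moreover have "z < x"
    proof (rule ccontr)
      assume "\<not> z < x"
      hence "x \<le> z" "z < y" using z by (auto simp: Sx_def)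
      hence "ch (eps (Suc k)) z y" using h2 by (intro ch_sub[OF h2]) auto
      thus False using z by (simp add: Sx_def)
    qed
    ultimately show "z \<in> Sx k x" using zE by (simp add: Sx_def)
  qed
  thus ?thesis by (simp add: idx_def)
qed

lemma idx_less: assumes x: "x \<in> E" and y: "y \<in> E" and xy: "x < y"
  and h1: "ch (eps k) x y" and h2: "\<not> ch (eps (Suc k)) x y"
  shows "idx k x < idx k y"
proof -
  have sub: "Sx k x \<subseteq> Sx k y"
  proof
    fix z assume z: "z \<in> Sx k x"
    have zE: "z \<in> E" using z by (simp add: Sx_def)
    have "ch (eps k) z y" using z by (intro ch_trans[OF x _ h1]) (simp add: Sx_def)
    moreover have "z < y" using z xy by (simp add: Sx_def)
    moreover have "\<not> ch (eps (Suc k)) z y"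
    proof
      assume a: "ch (eps (Suc k)) z y"
      have "z < x" using z by (simp add: Sx_def)
      hence "ch (eps (Suc k)) x y" using xy by (intro ch_sub[OF a]) auto
      thus False using h2 by simp
    qed
    ultimately show "z \<in> Sx k y" using zE by (simp add: Sx_def)
  qed
  have xin: "x \<in> Sx k y" using x xy h1 h2 by (simp add: Sx_def)
  have a: "cls (Suc k) ` Sx k x \<subseteq> cls (Suc k) ` Sx k y" using sub by (rule image_mono)
  have c: "cls (Suc k) x \<in> cls (Suc k) ` Sx k y" using xin by (rule imageI)
  have b: "cls (Suc k) ` Sx k x \<noteq> cls (Suc k) ` Sx k y" using self_notin[OF x, of k] c by metis
  have "cls (Suc k) ` Sx k x \<subset> cls (Suc k) ` Sx k y" using a b by (rule psubsetI)
  moreover have "finite (cls (Suc k) ` Sx k y)"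
    by (rule finite_subset[OF img_sub_W]) (use W_bound[OF y, of k] in blast)
  ultimately show ?thesis by (simp add: idx_def psubset_card_mono)
qed

end

lemma bilip_of_pairs:
  fixes E :: "real set" and \<phi> :: "real \<Rightarrow> real"
  assumes h: "\<And>x y. x \<in> E \<Longrightarrow> y \<in> E \<Longrightarrow> x < y \<Longrightarrow>
      0 < \<phi> y - \<phi> x \<and> y - x \<le> L * (\<phi> y - \<phi> x) \<and> \<phi> y - \<phi> x \<le> L * (y - x)"
  shows "strict_mono_on E \<phi> \<and> (\<forall>x\<in>E. \<forall>y\<in>E. \<bar>x - y\<bar> \<le> L * \<bar>\<phi> x - \<phi> y\<bar> \<and> \<bar>\<phi> x - \<phi> y\<bar> \<le> L * \<bar>x - y\<bar>)"
proof
  show "strict_mono_on E \<phi>" using h by (intro strict_mono_onI) force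
  show "\<forall>x\<in>E. \<forall>y\<in>E. \<bar>x - y\<bar> \<le> L * \<bar>\<phi> x - \<phi> y\<bar> \<and> \<bar>\<phi> x - \<phi> y\<bar> \<le> L * \<bar>x - y\<bar>"
  proof (intro ballI)
    fix x y assume xy: "x \<in> E" "y \<in> E"
    consider "x < y" | "y < x" | "x = y" by linarith
    thus "\<bar>x - y\<bar> \<le> L * \<bar>\<phi> x - \<phi> y\<bar> \<and> \<bar>\<phi> x - \<phi> y\<bar> \<le> L * \<bar>x - y\<bar>"
    proof cases
      case 1
      with h[OF xy 1] show ?thesis by (simp add: abs_minus_commute)
    next
      case 2
      with h[OF xy(2,1) 2] show ?thesis by simp
    qed simp
  qed
qed

context cB
begin

definition beta :: "real \<Rightarrow> nat \<Rightarrow> bool" where "beta x j = bv m (idx (j div m) x) (j mod m)"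
definition phi :: "real \<Rightarrow> real" where "phi x = bsum q (beta x)"
definition LB :: real where "LB = max 1 (max (Lam / (2 * d)) (2 * d * A * Lam / (q - 2)))"

lemma sep_main:
  assumes x: "x \<in> E" and y: "y \<in> E" and xy: "x < y"
  shows "0 < phi y - phi x \<and> y - x \<le> LB * (phi y - phi x) \<and> phi y - phi x \<le> LB * (y - x)"
proof -
  have L1: "1 < Lam" using Lam_gt by simp
  have L0: "0 < Lam" using Lam_gt by simp
  have q1: "1 < q" using q by simp
  have yx: "0 < y - x" using xy by simp
  obtain n where n: "2 * d * A / (y - x) < Lam ^ n" using real_arch_pow[OF L1] by blast
  have ex: "\<exists>k. \<not> ch (eps (Suc k)) x y"
  proof
    show "\<not> ch (eps (Suc n)) x y"
    proof
      assume "ch (eps (Suc n)) x y"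
      hence c: "\<bar>x - y\<bar> < A * eps (Suc n)" by (rule ch_diam[OF x y])
      have "Lam ^ n \<le> Lam ^ Suc n" using L1 by (intro power_increasing) auto
      hence "2 * d * A / (y - x) < Lam ^ Suc n" using n by simp
      hence "2 * d * A < (y - x) * Lam ^ Suc n" using yx by (simp add: divide_less_eq mult.commute)
      hence "A * eps (Suc n) < y - x" using L0 by (simp add: eps_def divide_less_eq mult.commute mult.left_commute)
      thus False using c xy by simp
    qed
  qed
  define K where "K = (LEAST k. \<not> ch (eps (Suc k)) x y)"
  have hK: "\<not> ch (eps (Suc K)) x y" unfolding K_def by (rule LeastI_ex[OF ex])
  have lessK: "ch (eps (Suc k)) x y" if "k < K" for k
    using not_less_Least[of k "\<lambda>k. \<not> ch (eps (Suc k)) x y"] that unfolding K_def by blast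
  have chK: "ch (eps K) x y"
  proof (cases K)
    case 0 thus ?thesis using level0[OF x y] by simp
  next
    case (Suc K') thus ?thesis using lessK[of K'] by simp
  qed
  have eqk: "idx k x = idx k y" if "k < K" for k
    using idx_eq[OF x y xy ch_mono[OF eps_le lessK[OF that]] lessK[OF that]] .
  have ltK: "idx K x < idx K y" by (rule idx_less[OF x y xy chK hK])
  obtain i where i: "i < m" "\<forall>j<i. bv m (idx K x) j = bv m (idx K y) j"
      "\<not> bv m (idx K x) i" "bv m (idx K y) i"
    using bv_first[OF ltK idx_lt[OF y]] by blast
  define j0 where "j0 = m * K + i"
  have j0d: "j0 div m = K" "j0 mod m = i" using i(1) by (auto simp: j0_def)
  have agree: "\<forall>j<j0. beta x j = beta y j"
  proof (intro allI impI)
    fix j assume j: "j < j0"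
    show "beta x j = beta y j"
    proof (cases "j < m * K")
      case True
      hence "j div m < K" by (intro less_mult_imp_div_less) (simp add: mult.commute)
      thus ?thesis using eqk by (simp add: beta_def)
    next
      case False
      have jd: "j div m = K" using False j i(1) by (intro div_nat_eqI) (auto simp: j0_def)
      have "j mod m = j - m * K" using jd by (metis minus_div_mult_eq_mod mult.commute)
      hence "j mod m < i" using False j by (simp add: j0_def)
      thus ?thesis using i(2) jd by (simp add: beta_def)
    qed
  qed
  have bx: "\<not> beta x j0" "beta y j0" using i j0d by (auto simp: beta_def)
  have D: "(q - 2) / q ^ Suc j0 \<le> phi y - phi x \<and> phi y - phi x \<le> 1 / q ^ j0"
    unfolding phi_def by (rule bsum_dist[OF q agree bx])
  have p1: "Lam ^ K \<le> q ^ j0"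
    unfolding Lam_def power_mult[symmetric] using q1 by (intro power_increasing) (auto simp: j0_def)
  have p2: "q ^ Suc j0 \<le> Lam ^ Suc K"
    unfolding Lam_def power_mult[symmetric] using q1 i(1) by (intro power_increasing) (auto simp: j0_def)
  have f1: "2 * d / Lam ^ Suc K \<le> y - x" using ch_far[OF hK] xy by (simp add: eps_def)
  have f2: "y - x < 2 * d * A / Lam ^ K" using ch_diam[OF x y chK] xy by (simp add: eps_def mult_ac)
  have LK: "0 < Lam ^ K" using L0 by simp
  have pos: "0 < (q - 2) / q ^ Suc j0" using q by simp
  have U: "phi y - phi x \<le> LB * (y - x)"
  proof -
    have "phi y - phi x \<le> 1 / q ^ j0" using D by simp
    also have "\<dots> \<le> 1 / Lam ^ K" using p1 LK by (intro divide_left_mono) auto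
    also have "\<dots> = (Lam / (2 * d)) * (2 * d / Lam ^ Suc K)" using dpos L0 by simp
    also have "\<dots> \<le> (Lam / (2 * d)) * (y - x)" using f1 dpos L0 by (intro mult_left_mono) auto
    also have "\<dots> \<le> LB * (y - x)" using yx by (intro mult_right_mono) (auto simp: LB_def)
    finally show ?thesis .
  qed
  have Lo: "y - x \<le> LB * (phi y - phi x)"
  proof -
    have "y - x \<le> 2 * d * A / Lam ^ K" using f2 by simp
    also have "\<dots> = (2 * d * A * Lam / (q - 2)) * ((q - 2) / Lam ^ Suc K)" using q L0 by simp
    also have "\<dots> \<le> (2 * d * A * Lam / (q - 2)) * ((q - 2) / q ^ Suc j0)"
      using p2 q dpos A_ge L0 by (intro mult_left_mono divide_left_mono) auto
    also have "\<dots> \<le> (2 * d * A * Lam / (q - 2)) * (phi y - phi x)"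
      using D q dpos A_ge L0 by (intro mult_left_mono) auto
    also have "\<dots> \<le> LB * (phi y - phi x)" using D pos by (intro mult_right_mono) (auto simp: LB_def)
    finally show ?thesis .
  qed
  show ?thesis using U Lo D pos by linarith
qed

lemma embedB: "\<exists>\<phi>. \<phi> ` E \<subseteq> cantor_set q \<and> strict_mono_on E \<phi> \<and>
   (\<forall>x\<in>E. \<forall>y\<in>E. \<bar>x - y\<bar> \<le> LB * \<bar>\<phi> x - \<phi> y\<bar> \<and> \<bar>\<phi> x - \<phi> y\<bar> \<le> LB * \<bar>x - y\<bar>)"
proof (intro exI conjI)
  show "phi ` E \<subseteq> cantor_set q" using bsum_in[OF q] by (auto simp: phi_def)
  have "strict_mono_on E phi \<and> (\<forall>x\<in>E. \<forall>y\<in>E. \<bar>x - y\<bar> \<le> LB * \<bar>phi x - phi y\<bar> \<and> \<bar>phi x - phi y\<bar> \<le> LB * \<bar>x - y\<bar>)"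
    by (rule bilip_of_pairs) (rule sep_main)
  thus "strict_mono_on E phi" "\<forall>x\<in>E. \<forall>y\<in>E. \<bar>x - y\<bar> \<le> LB * \<bar>phi x - phi y\<bar> \<and> \<bar>phi x - phi y\<bar> \<le> LB * \<bar>x - y\<bar>"
    by auto
qed

end

lemma pow_powr2: fixes p t :: real shows "0 < p \<Longrightarrow> (p ^ k) powr t = (p powr t) ^ k"
proof -
  assume p: "0 < p"
  have "(p ^ k) powr t = (p powr real k) powr t" using p by (simp add: powr_realpow)
  also have "\<dots> = p powr (real k * t)" by (simp add: powr_powr)
  also have "\<dots> = (p powr t) ^ k" using p by (simp add: powr_power)
  finally show ?thesis .
qed

lemma num_cong: "(\<forall>i<m. f i = g i) \<Longrightarrow> num m f = num m g"
  by (induction m arbitrary: f g) auto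

locale cA = areg F t \<mu> c C for F t \<mu> c C +
  fixes p :: real and m :: nat
  assumes p: "2 < p" and pt: "2 < p powr t"
    and m: "1 \<le> m" "(C / c) * 6 powr t \<le> (p powr t / 2) ^ m"
begin

definition "Lam = p ^ m"

lemma Lam_gt: "2 < Lam"
proof -
  have "p ^ 1 \<le> p ^ m" using p m by (intro power_increasing) auto
  thus ?thesis using p by (simp add: Lam_def)
qed

lemma children:
  assumes z: "z \<in> F" and R: "0 < Rr" "Rr \<le> d"
  shows "\<exists>Y. Y \<subseteq> F \<inter> cball z Rr \<and> finite Y \<and> 2 ^ m \<le> card Y \<and>
     (\<forall>y\<in>Y. \<forall>y'\<in>Y. y \<noteq> y' \<longrightarrow> 6 * Rr / Lam \<le> \<bar>y - y'\<bar>)"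
proof -
  define \<delta> where "\<delta> = 6 * Rr / Lam"
  have L0: "0 < Lam" using Lam_gt by simp
  have \<delta>0: "0 < \<delta>" using R L0 by (simp add: \<delta>_def)
  have "2 * d \<le> d * Lam" using Lam_gt dpos by (simp add: mult.commute mult_right_mono less_imp_le)
  hence "2 * Rr \<le> d * Lam" using R by linarith
  hence \<delta>3: "\<delta> \<le> 3 * d" using R Lam_gt by (simp add: \<delta>_def divide_le_eq)
  define P where "P Y \<longleftrightarrow> Y \<subseteq> F \<inter> cball z Rr \<and> finite Y \<and> (\<forall>y\<in>Y. \<forall>y'\<in>Y. y \<noteq> y' \<longrightarrow> \<delta> \<le> \<bar>y - y'\<bar>)" for Y
  define B where "B = nat \<lceil>C * (Rr + \<delta>/3) powr t / (c * (\<delta>/3) powr t)\<rceil> + 1"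
  have bnd: "card Y < B" if PY: "P Y" for Y
  proof -
    have Yb: "\<forall>y\<in>Y. \<bar>y - z\<bar> \<le> Rr" using PY by (auto simp: P_def dist_real_def abs_minus_commute)
    have "real (card Y) * (c * (\<delta>/3) powr t) \<le> C * (Rr + \<delta>/3) powr t"
      by (rule packing[OF _ _ z Yb _ \<delta>0 \<delta>3]) (use PY in \<open>auto simp: P_def\<close>)
    moreover have "0 < c * (\<delta>/3) powr t" using cpos \<delta>0 by simp
    ultimately have "real (card Y) \<le> C * (Rr + \<delta>/3) powr t / (c * (\<delta>/3) powr t)"
      by (simp add: le_divide_eq)
    hence "real (card Y) < real B" unfolding B_def by linarith
    thus ?thesis by simp
  qed
  have P0: "P {}" by (simp add: P_def)
  obtain Y0 where Y0: "P Y0" "\<And>Y. P Y \<Longrightarrow> card Y \<le> card Y0"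
    using ex_has_greatest_nat[of P "{}" card B] P0 bnd by blast
  have cov: "cball z Rr \<inter> F \<subseteq> (\<Union>y\<in>Y0. cball y \<delta>)"
  proof
    fix w assume w: "w \<in> cball z Rr \<inter> F"
    show "w \<in> (\<Union>y\<in>Y0. cball y \<delta>)"
    proof (rule ccontr)
      assume nw: "w \<notin> (\<Union>y\<in>Y0. cball y \<delta>)"
      have wn: "w \<notin> Y0" using nw \<delta>0 by force
      have far: "\<forall>y\<in>Y0. \<delta> \<le> \<bar>y - w\<bar>" using nw by (force simp: dist_real_def)
      have "P (insert w Y0)"
        using Y0(1) w far unfolding P_def by (auto simp: abs_minus_commute)
      hence "card (insert w Y0) \<le> card Y0" by (rule Y0(2))
      moreover have "card (insert w Y0) = Suc (card Y0)" using wn Y0(1) by (simp add: P_def)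
      ultimately show False by simp
    qed
  qed
  have fin: "finite Y0" and YF: "Y0 \<subseteq> F" using Y0(1) by (auto simp: P_def)
  have "ennreal (c * Rr powr t) \<le> emeasure \<mu> (cball z Rr)" by (rule lower[OF z R])
  also have "\<dots> \<le> ennreal (real (card Y0) * (C * \<delta> powr t))"
    by (rule covering[of Y0 "\<lambda>y. y"]) (use fin YF cov \<delta>0 in auto)
  finally have ineq: "c * Rr powr t \<le> real (card Y0) * (C * \<delta> powr t)"
    using Cpos by (subst (asm) ennreal_le_iff) auto
  have "\<delta> powr t = 6 powr t * Rr powr t / (p powr t) ^ m"
    using R L0 p by (simp add: \<delta>_def powr_divide powr_mult Lam_def pow_powr2)
  hence "c * Rr powr t \<le> real (card Y0) * C * 6 powr t * Rr powr t / (p powr t) ^ m"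
    using ineq by (simp add: mult_ac)
  moreover have "0 < Rr powr t" using R by simp
  moreover have ppos: "0 < (p powr t) ^ m" using p by simp
  ultimately have "c * (p powr t) ^ m \<le> real (card Y0) * C * 6 powr t"
    by (simp add: le_divide_eq mult_ac)
  hence "(p powr t / 2) ^ m * 2 ^ m \<le> real (card Y0) * (C / c * 6 powr t)"
    using cpos by (simp add: power_divide field_simps)
  moreover have "(C / c * 6 powr t) * 2 ^ m \<le> (p powr t / 2) ^ m * 2 ^ m"
    using m(2) by (intro mult_right_mono) auto
  ultimately have "(C / c * 6 powr t) * 2 ^ m \<le> (C / c * 6 powr t) * real (card Y0)" by (simp add: mult.commute)
  moreover have "0 < C / c * 6 powr t" using cpos Cpos by simp
  ultimately have "2 ^ m \<le> real (card Y0)" using mult_le_cancel_left_pos by blast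
  hence "2 ^ m \<le> card Y0" by (simp flip: of_nat_le_iff)
  thus ?thesis using Y0(1) by (intro exI[of _ Y0]) (auto simp: P_def \<delta>_def)
qed

end

context cA
begin

definition Ych :: "real \<Rightarrow> real \<Rightarrow> real set" where
  "Ych z Rr = (SOME Y. Y \<subseteq> F \<inter> cball z Rr \<and> finite Y \<and> 2 ^ m \<le> card Y \<and>
     (\<forall>y\<in>Y. \<forall>y'\<in>Y. y \<noteq> y' \<longrightarrow> 6 * Rr / Lam \<le> \<bar>y - y'\<bar>))"
definition child :: "real \<Rightarrow> real \<Rightarrow> nat \<Rightarrow> real" where
  "child z Rr n = sorted_list_of_set (Ych z Rr) ! n"
definition RR :: "nat \<Rightarrow> real" where "RR k = d / Lam ^ k"
definition z0 :: real where "z0 = (SOME z. z \<in> F)"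

fun zz :: "nat \<Rightarrow> (nat \<Rightarrow> bool) \<Rightarrow> real" where
  "zz 0 b = z0"
| "zz (Suc k) b = child (zz k b) (RR k) (num m (\<lambda>i. b (m * k + i)))"

lemma z0F: "z0 \<in> F" using ne unfolding z0_def by (simp add: some_in_eq)

lemma RR_pos: "0 < RR k" using dpos Lam_gt by (simp add: RR_def)
lemma RR_le: "RR k \<le> d"
proof -
  have "1 \<le> Lam ^ k" using Lam_gt by (intro one_le_power) auto
  thus ?thesis using dpos by (simp add: RR_def divide_le_eq mult_le_cancel_left1)
qed
lemma RR_Suc: "RR (Suc k) = RR k / Lam" by (simp add: RR_def field_simps)

lemma Ych_props: assumes "z \<in> F" "0 < Rr" "Rr \<le> d"
  shows "Ych z Rr \<subseteq> F \<inter> cball z Rr \<and> finite (Ych z Rr) \<and> 2 ^ m \<le> card (Ych z Rr) \<and>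
     (\<forall>y\<in>Ych z Rr. \<forall>y'\<in>Ych z Rr. y \<noteq> y' \<longrightarrow> 6 * Rr / Lam \<le> \<bar>y - y'\<bar>)"
  unfolding Ych_def by (rule someI_ex[OF children[OF assms]])

lemma child_in: assumes "z \<in> F" "0 < Rr" "Rr \<le> d" "n < 2 ^ m"
  shows "child z Rr n \<in> F \<and> \<bar>child z Rr n - z\<bar> \<le> Rr"
proof -
  note Y = Ych_props[OF assms(1-3)]
  have len: "length (sorted_list_of_set (Ych z Rr)) = card (Ych z Rr)" by simp
  have "n < length (sorted_list_of_set (Ych z Rr))" using Y assms(4) len by linarith
  hence "child z Rr n \<in> Ych z Rr" unfolding child_def using Y
    by (metis nth_mem set_sorted_list_of_set)
  thus ?thesis using Y by (auto simp: dist_real_def abs_minus_commute)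
qed

lemma child_sep: assumes "z \<in> F" "0 < Rr" "Rr \<le> d" "n < n'" "n' < 2 ^ m"
  shows "6 * Rr / Lam \<le> child z Rr n' - child z Rr n"
proof -
  note Y = Ych_props[OF assms(1-3)]
  define xs where "xs = sorted_list_of_set (Ych z Rr)"
  have len: "length xs = card (Ych z Rr)" by (simp add: xs_def)
  have n': "n' < length xs" using Y assms(5) len by linarith
  have sw: "sorted_wrt (<) xs" unfolding xs_def by (rule strict_sorted_list_of_set)
  have lt: "xs ! n < xs ! n'" using sorted_wrt_nth_less[OF sw assms(4) n'] .
  have st: "set xs = Ych z Rr" using Y by (simp add: xs_def)
  have "xs ! n \<in> set xs" "xs ! n' \<in> set xs" using n' assms(4) by (auto intro!: nth_mem)
  hence mem: "xs ! n \<in> Ych z Rr" "xs ! n' \<in> Ych z Rr" using st by auto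
  have "6 * Rr / Lam \<le> \<bar>xs ! n' - xs ! n\<bar>" using Y mem lt by force
  thus ?thesis using lt by (simp add: child_def xs_def)
qed

lemma zz_props: "zz k b \<in> F \<and> \<bar>zz (Suc k) b - zz k b\<bar> \<le> RR k"
proof (induction k)
  case 0
  show ?case using child_in[OF z0F RR_pos RR_le num_lt] z0F by simp
next
  case (Suc k)
  have F: "zz (Suc k) b \<in> F" using Suc.IH child_in[OF _ RR_pos RR_le num_lt] by simp
  show ?case using F child_in[OF F RR_pos RR_le num_lt] by simp
qed

lemma zz_agree: "(\<forall>j<m * K. b j = b' j) \<Longrightarrow> k \<le> K \<Longrightarrow> zz k b = zz k b'"
proof (induction k)
  case 0 show ?case by simp
next
  case (Suc k)
  have "zz k b = zz k b'" using Suc by simp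
  moreover have "num m (\<lambda>i. b (m * k + i)) = num m (\<lambda>i. b' (m * k + i))"
  proof (rule num_cong, intro allI impI)
    fix i assume i: "i < m"
    have "m * k + i < m * K"
    proof -
      have "m * k + i < m * k + m" using i by simp
      also have "\<dots> = m * Suc k" by simp
      also have "\<dots> \<le> m * K" using Suc.prems(2) by (intro mult_le_mono2) simp
      finally show ?thesis .
    qed
    thus "b (m * k + i) = b' (m * k + i)" using Suc.prems(1) by simp
  qed
  ultimately show ?case by simp
qed

end

context cA
begin

definition Dz :: "(nat \<Rightarrow> bool) \<Rightarrow> nat \<Rightarrow> real" where "Dz b k = zz (Suc k) b - zz k b"
definition Psi :: "(nat \<Rightarrow> bool) \<Rightarrow> real" where "Psi b = z0 + suminf (Dz b)"

lemma RR_sums: "(\<lambda>k. RR (k + n)) sums (RR n * (Lam / (Lam - 1)))"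
proof -
  have L: "0 < Lam" "1 < Lam" using Lam_gt by auto
  have g: "(\<lambda>k. (1 / Lam) ^ k) sums (1 / (1 - 1 / Lam))" using L by (intro geometric_sums) auto
  have "(\<lambda>k. RR n * (1 / Lam) ^ k) sums (RR n * (1 / (1 - 1 / Lam)))" by (rule sums_mult[OF g])
  moreover have "(\<lambda>k. RR n * (1 / Lam) ^ k) = (\<lambda>k. RR (k + n))"
    by (rule ext) (simp add: RR_def power_add power_divide field_simps)
  moreover have "1 / (1 - 1 / Lam) = Lam / (Lam - 1)" using L by (simp add: field_simps)
  ultimately show ?thesis by simp
qed

lemma Dz_abs: "\<bar>Dz b k\<bar> \<le> RR k" using zz_props[of k b] by (simp add: Dz_def)

lemma Dz_summable: "summable (\<lambda>k. \<bar>Dz b (k + n)\<bar>)"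
  by (rule summable_rabs_comparison_test[of _ "\<lambda>k. RR (k + n)"])
    (use Dz_abs sums_summable[OF RR_sums] in auto)

lemma Psi_tail: "\<bar>Psi b - zz n b\<bar> \<le> 2 * RR n"
proof -
  have s0: "summable (Dz b)" using summable_rabs_cancel[OF Dz_summable[of b 0]] by simp
  have "suminf (Dz b) = (\<Sum>k. Dz b (k + n)) + (\<Sum>i<n. Dz b i)"
    by (rule suminf_split_initial_segment[OF s0])
  moreover have "(\<Sum>i<n. Dz b i) = zz n b - zz 0 b" unfolding Dz_def by (rule sum_lessThan_telescope)
  ultimately have e: "Psi b - zz n b = (\<Sum>k. Dz b (k + n))" by (simp add: Psi_def)
  have "\<bar>\<Sum>k. Dz b (k + n)\<bar> \<le> (\<Sum>k. \<bar>Dz b (k + n)\<bar>)" by (rule summable_rabs[OF Dz_summable])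
  also have "\<dots> \<le> (\<Sum>k. RR (k + n))"
    by (intro suminf_le Dz_summable sums_summable[OF RR_sums] Dz_abs)
  also have "\<dots> = RR n * (Lam / (Lam - 1))" using RR_sums by (simp add: sums_iff)
  also have "\<dots> \<le> RR n * 2"
    using Lam_gt RR_pos[of n] by (intro mult_left_mono) (auto simp: divide_le_eq)
  finally show ?thesis using e by simp
qed

lemma Psi_in: "Psi b \<in> F"
proof -
  have "(\<lambda>k. zz k b - Psi b) \<longlonglongrightarrow> 0"
  proof (rule Lim_null_comparison)
    show "\<forall>\<^sub>F k in sequentially. norm (zz k b - Psi b) \<le> 2 * d * (1 / Lam ^ k)"
      using Psi_tail by (intro always_eventually allI) (simp add: RR_def abs_minus_commute)
    show "(\<lambda>k. 2 * d * (1 / Lam ^ k)) \<longlonglongrightarrow> 0"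
      by (rule tendsto_mult_right_zero[OF inv_pow_lim]) (use Lam_gt in simp)
  qed
  hence "(\<lambda>k. zz k b) \<longlonglongrightarrow> Psi b" by (simp add: LIM_zero_iff)
  thus ?thesis by (rule closed_sequentially[OF cls, rotated]) (use zz_props in blast)
qed

lemma Psi_sep:
  assumes eq: "\<forall>i<j. b i = b' i" and bj: "\<not> b j" "b' j"
  shows "2 * RR (Suc (j div m)) \<le> Psi b' - Psi b \<and> Psi b' - Psi b \<le> 6 * RR (j div m)"
proof -
  define K where "K = j div m"
  define i where "i = j mod m"
  have m0: "0 < m" using m by simp
  have ji: "j = m * K + i" "i < m" using m0 by (auto simp: K_def i_def)
  have ag: "\<forall>j'<m * K. b j' = b' j'" using eq ji by auto
  have zK: "zz K b = zz K b'" by (rule zz_agree[OF ag order_refl])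
  have nlt: "num m (\<lambda>i. b (m * K + i)) < num m (\<lambda>i. b' (m * K + i))"
    by (rule num_mono[OF ji(2)]) (use eq bj ji in auto)
  have zF: "zz K b \<in> F" using zz_props by blast
  have sep: "6 * RR K / Lam \<le> zz (Suc K) b' - zz (Suc K) b"
    using child_sep[OF zF RR_pos RR_le nlt num_lt] zK by simp
  have t1: "\<bar>Psi b - zz (Suc K) b\<bar> \<le> 2 * RR (Suc K)" "\<bar>Psi b' - zz (Suc K) b'\<bar> \<le> 2 * RR (Suc K)"
    by (rule Psi_tail)+
  have s1: "\<bar>zz (Suc K) b - zz K b\<bar> \<le> RR K" "\<bar>zz (Suc K) b' - zz K b'\<bar> \<le> RR K"
    using zz_props by blast+
  have R1: "RR (Suc K) = RR K / Lam" by (rule RR_Suc)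
  have "RR K / Lam \<le> RR K / 2" by (rule divide_left_mono) (use RR_pos[of K] Lam_gt in auto)
  hence R2: "RR (Suc K) \<le> RR K / 2" by (simp add: R1)
  have sep': "6 * RR (Suc K) \<le> zz (Suc K) b' - zz (Suc K) b" using sep R1 by simp
  have lo: "2 * RR (Suc K) \<le> Psi b' - Psi b" using sep' t1 unfolding abs_le_iff by linarith
  have hi: "Psi b' - Psi b \<le> 6 * RR K" using t1 s1 zK R2 unfolding abs_le_iff by linarith
  show ?thesis using lo hi by (simp add: K_def)
qed

end

context cA
begin

definition dec :: "real \<Rightarrow> nat \<Rightarrow> bool" where "dec x = (SOME b. bsum p b = x)"
definition phiA :: "real \<Rightarrow> real" where "phiA x = Psi (dec x)"
definition LA :: real where "LA = max 1 (max (Lam / (2 * d)) (6 * d * Lam / (p - 2)))"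

lemma dec: "x \<in> cantor_set p \<Longrightarrow> bsum p (dec x) = x"
  unfolding dec_def by (rule someI_ex[OF decode[OF p]])

lemma sepA:
  assumes x: "x \<in> cantor_set p" and y: "y \<in> cantor_set p" and xy: "x < y"
  shows "0 < phiA y - phiA x \<and> y - x \<le> LA * (phiA y - phiA x) \<and> phiA y - phiA x \<le> LA * (y - x)"
proof -
  have L0: "0 < Lam" using Lam_gt by simp
  have p1: "1 < p" using p by simp
  have "bsum p (dec x) < bsum p (dec y)" using dec[OF x] dec[OF y] xy by simp
  then obtain j where j: "\<forall>i<j. dec x i = dec y i" "\<not> dec x j" "dec y j"
    by (rule bsum_less[OF p])
  define K where "K = j div m"
  have m0: "0 < m" using m by simp
  have PS: "2 * RR (Suc K) \<le> phiA y - phiA x \<and> phiA y - phiA x \<le> 6 * RR K"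
    using Psi_sep[OF j] by (simp add: phiA_def K_def)
  have BD: "(p - 2) / p ^ Suc j \<le> y - x \<and> y - x \<le> 1 / p ^ j"
    using bsum_dist[OF p j] dec[OF x] dec[OF y] by simp
  have mK: "m * K \<le> j" by (simp add: K_def)
  have mK2: "Suc j \<le> m * Suc K"
  proof -
    have "j < m * K + m" using m0 by (simp add: K_def) (metis div_mult_mod_eq mod_less_divisor add_less_cancel_left mult.commute)
    thus ?thesis by simp
  qed
  have P1: "Lam ^ K \<le> p ^ j"
    unfolding Lam_def power_mult[symmetric] using p1 mK by (intro power_increasing) auto
  have P2: "p ^ Suc j \<le> Lam ^ Suc K"
    unfolding Lam_def power_mult[symmetric] using p1 mK2 by (intro power_increasing) auto
  have LK: "0 < Lam ^ K" using L0 by simp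
  have pos: "0 < 2 * RR (Suc K)" using RR_pos by simp
  have U: "phiA y - phiA x \<le> LA * (y - x)"
  proof -
    have "phiA y - phiA x \<le> 6 * RR K" using PS by simp
    also have "\<dots> = (6 * d * Lam / (p - 2)) * ((p - 2) / Lam ^ Suc K)" using p L0 by (simp add: RR_def)
    also have "\<dots> \<le> (6 * d * Lam / (p - 2)) * ((p - 2) / p ^ Suc j)"
      using P2 p dpos L0 by (intro mult_left_mono divide_left_mono) auto
    also have "\<dots> \<le> (6 * d * Lam / (p - 2)) * (y - x)" using BD p dpos L0 by (intro mult_left_mono) auto
    also have "\<dots> \<le> LA * (y - x)" using xy by (intro mult_right_mono) (auto simp: LA_def)
    finally show ?thesis .
  qed
  have Lo: "y - x \<le> LA * (phiA y - phiA x)"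
  proof -
    have "y - x \<le> 1 / p ^ j" using BD by simp
    also have "\<dots> \<le> 1 / Lam ^ K" using P1 LK by (intro divide_left_mono) auto
    also have "\<dots> = (Lam / (2 * d)) * (2 * RR (Suc K))" using dpos L0 by (simp add: RR_def)
    also have "\<dots> \<le> (Lam / (2 * d)) * (phiA y - phiA x)" using PS dpos L0 by (intro mult_left_mono) auto
    also have "\<dots> \<le> LA * (phiA y - phiA x)" using PS pos by (intro mult_right_mono) (auto simp: LA_def)
    finally show ?thesis .
  qed
  show ?thesis using U Lo PS pos by linarith
qed

lemma embedA: "\<exists>\<phi>. \<phi> ` cantor_set p \<subseteq> F \<and> strict_mono_on (cantor_set p) \<phi> \<and>
   (\<forall>x\<in>cantor_set p. \<forall>y\<in>cantor_set p. \<bar>x - y\<bar> \<le> LA * \<bar>\<phi> x - \<phi> y\<bar> \<and> \<bar>\<phi> x - \<phi> y\<bar> \<le> LA * \<bar>x - y\<bar>)"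
proof (intro exI conjI)
  show "phiA ` cantor_set p \<subseteq> F" using Psi_in by (auto simp: phiA_def)
  have "strict_mono_on (cantor_set p) phiA \<and> (\<forall>x\<in>cantor_set p. \<forall>y\<in>cantor_set p. \<bar>x - y\<bar> \<le> LA * \<bar>phiA x - phiA y\<bar> \<and> \<bar>phiA x - phiA y\<bar> \<le> LA * \<bar>x - y\<bar>)"
    by (rule bilip_of_pairs) (rule sepA)
  thus "strict_mono_on (cantor_set p) phiA"
    "\<forall>x\<in>cantor_set p. \<forall>y\<in>cantor_set p. \<bar>x - y\<bar> \<le> LA * \<bar>phiA x - phiA y\<bar> \<and> \<bar>phiA x - phiA y\<bar> \<le> LA * \<bar>x - y\<bar>"
    by auto
qed

end

lemma exists_pow_ge: fixes x M :: real assumes "1 < x" shows "\<exists>m\<ge>1. M \<le> x ^ m"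
proof -
  obtain n where n: "M < x ^ n" using real_arch_pow[OF assms] by blast
  have "x ^ n \<le> x ^ max 1 n" using assms by (intro power_increasing) auto
  thus ?thesis using n by (intro exI[of _ "max 1 n"]) auto
qed

definition bilip :: "real set \<Rightarrow> (real \<Rightarrow> real) \<Rightarrow> real \<Rightarrow> bool" where
  "bilip E \<phi> L \<longleftrightarrow> (\<forall>x\<in>E. \<forall>y\<in>E. \<bar>x - y\<bar> \<le> L * \<bar>\<phi> x - \<phi> y\<bar> \<and> \<bar>\<phi> x - \<phi> y\<bar> \<le> L * \<bar>x - y\<bar>)"

lemma bilip_mono: "bilip E \<phi> L \<Longrightarrow> L \<le> L' \<Longrightarrow> bilip E \<phi> L'"
  unfolding bilip_def by (meson abs_ge_zero mult_right_mono order_trans)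

lemma powr_unique: fixes p p' s :: real
  assumes "0 < p" "0 < p'" "0 < s" "p powr s = p' powr s" shows "p = p'"
proof -
  have a: "(p powr s) powr (1/s) = p" using assms(1,3) by (simp add: powr_powr)
  have b: "(p' powr s) powr (1/s) = p'" using assms(2,3) by (simp add: powr_powr)
  show ?thesis using a b assms(4) by metis
qed

lemma caseA:
  assumes st: "s < t" and dF: "0 < dF" and dE: "0 < dE"
  shows "\<exists>L\<ge>1. \<forall>E F \<kappa> \<mu> p. ahlfors_regular E s \<kappa> c1 C1 \<and> ahlfors_regular F t \<mu> c2 C2 \<and>
     diameter E = dE \<and> diameter F = dF \<and> 2 < p \<and> E = cantor_set p \<longrightarrow>
     (\<exists>\<phi>. \<phi> ` E \<subseteq> F \<and> strict_mono_on E \<phi> \<and> bilip E \<phi> L)"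
proof (cases "\<exists>E F \<kappa> \<mu> p. ahlfors_regular E s \<kappa> c1 C1 \<and> ahlfors_regular F t \<mu> c2 C2 \<and>
     diameter E = dE \<and> diameter F = dF \<and> 2 < p \<and> E = cantor_set p")
  case False
  show ?thesis
  proof (intro exI[of _ 1] conjI allI impI)
    fix E F \<kappa> \<mu> p
    assume H: "ahlfors_regular E s \<kappa> c1 C1 \<and> ahlfors_regular F t \<mu> c2 C2 \<and>
     diameter E = dE \<and> diameter F = dF \<and> 2 < p \<and> E = cantor_set p"
    have "\<exists>E F \<kappa> \<mu> p. ahlfors_regular E s \<kappa> c1 C1 \<and> ahlfors_regular F t \<mu> c2 C2 \<and>
     diameter E = dE \<and> diameter F = dF \<and> 2 < p \<and> E = cantor_set p" using H by (intro exI)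
    thus "\<exists>\<phi>. \<phi> ` E \<subseteq> F \<and> strict_mono_on E \<phi> \<and> bilip E \<phi> 1" using False by simp
  qed simp
next
  case True
  then obtain E1 F1 \<kappa>1 \<mu>1 p1 where I1: "ahlfors_regular E1 s \<kappa>1 c1 C1" "ahlfors_regular F1 t \<mu>1 c2 C2"
    "diameter E1 = dE" "diameter F1 = dF" "2 < p1" "E1 = cantor_set p1" by blast
  have aE1: "areg (cantor_set p1) s \<kappa>1 c1 C1" using I1 dE by (unfold_locales) auto
  have ps1: "p1 powr s = 2" by (rule dim_eq[OF I1(5) aE1])
  have s0: "0 < s"
  proof (rule ccontr)
    assume "\<not> 0 < s"
    hence "p1 powr s \<le> p1 powr 0" using I1(5) by (intro powr_mono) auto
    thus False using ps1 I1(5) by simp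
  qed
  have aF1: "areg F1 t \<mu>1 c2 C2" using I1 dF by (unfold_locales) auto
  have "p1 powr s < p1 powr t" using st I1(5) by (intro powr_less_mono) auto
  hence pt1: "2 < p1 powr t" using ps1 by simp
  have base: "1 < p1 powr t / 2" using pt1 by simp
  obtain m where m: "1 \<le> m" "(C2 / c2) * 6 powr t \<le> (p1 powr t / 2) ^ m"
    using exists_pow_ge[OF base] by blast
  define L where "L = max 1 (max (p1 ^ m / (2 * dF)) (6 * dF * p1 ^ m / (p1 - 2)))"
  show ?thesis
  proof (intro exI[of _ L] conjI allI impI)
    show "1 \<le> L" by (simp add: L_def)
    fix E F \<kappa> \<mu> p
    assume H: "ahlfors_regular E s \<kappa> c1 C1 \<and> ahlfors_regular F t \<mu> c2 C2 \<and>
     diameter E = dE \<and> diameter F = dF \<and> 2 < p \<and> E = cantor_set p"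
    have Ha: "ahlfors_regular E s \<kappa> c1 C1" "ahlfors_regular F t \<mu> c2 C2" "diameter E = dE"
      "diameter F = dF" "2 < p" "E = cantor_set p" using H by blast+
    have aE: "areg (cantor_set p) s \<kappa> c1 C1"
      by (rule areg.intro) (use Ha(1,3,6) dE in simp_all)
    have "p powr s = 2" by (rule dim_eq[OF Ha(5) aE])
    hence "p powr s = p1 powr s" using ps1 by simp
    hence pp: "p = p1" using Ha(5) I1(5) s0 by (metis powr_unique less_trans zero_less_numeral)
    have aF: "areg F t \<mu> c2 C2"
      by (rule areg.intro) (use Ha(2,4) dF in simp_all)
    interpret cA F t \<mu> c2 C2 p1 m
      by (rule cA.intro[OF aF], unfold_locales) (use I1(5) pt1 m in auto)
    have LAe: "LA = L" using Ha(4) by (simp add: LA_def Lam_def L_def)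
    have Ec: "E = cantor_set p1" using Ha(6) pp by simp
    obtain \<phi> where \<phi>: "\<phi> ` cantor_set p1 \<subseteq> F" "strict_mono_on (cantor_set p1) \<phi>"
      "\<forall>x\<in>cantor_set p1. \<forall>y\<in>cantor_set p1. \<bar>x - y\<bar> \<le> LA * \<bar>\<phi> x - \<phi> y\<bar> \<and> \<bar>\<phi> x - \<phi> y\<bar> \<le> LA * \<bar>x - y\<bar>"
      using embedA by blast
    show "\<exists>\<phi>. \<phi> ` E \<subseteq> F \<and> strict_mono_on E \<phi> \<and> bilip E \<phi> L"
      using \<phi> unfolding Ec bilip_def LAe[symmetric] by blast
  qed
qed

lemma caseB:
  assumes st: "s < t" and dF: "0 < dF" and dE: "0 < dE"
  shows "\<exists>L\<ge>1. \<forall>E F \<kappa> \<mu> q. ahlfors_regular E s \<kappa> c1 C1 \<and> ahlfors_regular F t \<mu> c2 C2 \<and>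
     diameter E = dE \<and> diameter F = dF \<and> 2 < q \<and> F = cantor_set q \<longrightarrow>
     (\<exists>\<phi>. \<phi> ` E \<subseteq> F \<and> strict_mono_on E \<phi> \<and> bilip E \<phi> L)"
proof (cases "\<exists>E F \<kappa> \<mu> q. ahlfors_regular E s \<kappa> c1 C1 \<and> ahlfors_regular F t \<mu> c2 C2 \<and>
     diameter E = dE \<and> diameter F = dF \<and> 2 < q \<and> F = cantor_set q")
  case False
  show ?thesis
  proof (intro exI[of _ 1] conjI allI impI)
    fix E F \<kappa> \<mu> q
    assume H: "ahlfors_regular E s \<kappa> c1 C1 \<and> ahlfors_regular F t \<mu> c2 C2 \<and>
     diameter E = dE \<and> diameter F = dF \<and> 2 < q \<and> F = cantor_set q"
    have "\<exists>E F \<kappa> \<mu> q. ahlfors_regular E s \<kappa> c1 C1 \<and> ahlfors_regular F t \<mu> c2 C2 \<and>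
     diameter E = dE \<and> diameter F = dF \<and> 2 < q \<and> F = cantor_set q" using H by (intro exI)
    thus "\<exists>\<phi>. \<phi> ` E \<subseteq> F \<and> strict_mono_on E \<phi> \<and> bilip E \<phi> 1" using False by simp
  qed simp
next
  case True
  then obtain E1 F1 \<kappa>1 \<mu>1 q1 where I1: "ahlfors_regular E1 s \<kappa>1 c1 C1" "ahlfors_regular F1 t \<mu>1 c2 C2"
    "diameter E1 = dE" "diameter F1 = dF" "2 < q1" "F1 = cantor_set q1" by blast
  have aF1: "areg (cantor_set q1) t \<mu>1 c2 C2"
    by (rule areg.intro) (use I1(2,4,6) dF in simp_all)
  have qt1: "q1 powr t = 2" by (rule dim_eq[OF I1(5) aF1])
  have t0: "0 < t"
  proof (rule ccontr)
    assume "\<not> 0 < t"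
    hence "q1 powr t \<le> q1 powr 0" using I1(5) by (intro powr_mono) auto
    thus False using qt1 I1(5) by simp
  qed
  have aE1: "areg E1 s \<kappa>1 c1 C1"
    by (rule areg.intro) (use I1(1,3) dE in simp_all)
  have c1: "0 < c1" "c1 \<le> C1" using areg.cpos[OF aE1] areg.cC[OF aE1] by auto
  have "q1 powr s < q1 powr t" using st I1(5) by (intro powr_less_mono) auto
  hence sq: "q1 powr s < 2" using qt1 by simp
  have "q1 powr t < q1 powr 1" using qt1 I1(5) by simp
  hence t1: "t < 1" using I1(5) powr_less_cancel_iff[of q1 t 1] by linarith
  have s1: "s < 1" using st t1 by simp
  define K where "K = (C1 / c1) * 9 powr s"
  have K0: "0 < K" using c1 by (simp add: K_def)
  define n0 where "n0 = nat \<lceil>K powr (1 / (1 - s))\<rceil> + 1"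
  have n01: "1 \<le> n0" by (simp add: n0_def)
  have "K powr (1 / (1 - s)) < real n0" unfolding n0_def by linarith
  hence "(K powr (1 / (1 - s))) powr (1 - s) < real n0 powr (1 - s)"
    using s1 by (intro powr_less_mono2) auto
  moreover have "(K powr (1 / (1 - s))) powr (1 - s) = K" using s1 K0 by (simp add: powr_powr)
  ultimately have n0b: "(C1 / c1) * 9 powr s < real n0 powr (1 - s)" by (simp add: K_def)
  have base: "1 < 2 / q1 powr s" using sq I1(5) by simp
  obtain m where m: "1 \<le> m" "(C1 / c1) * (6 * (3 * real n0)) powr s \<le> (2 / q1 powr s) ^ m"
    using exists_pow_ge[OF base] by blast
  define L where "L = max 1 (max (q1 ^ m / (2 * dE)) (2 * dE * (3 * real n0) * q1 ^ m / (q1 - 2)))"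
  show ?thesis
  proof (intro exI[of _ L] conjI allI impI)
    show "1 \<le> L" by (simp add: L_def)
    fix E F \<kappa> \<mu> q
    assume H: "ahlfors_regular E s \<kappa> c1 C1 \<and> ahlfors_regular F t \<mu> c2 C2 \<and>
     diameter E = dE \<and> diameter F = dF \<and> 2 < q \<and> F = cantor_set q"
    have Ha: "ahlfors_regular E s \<kappa> c1 C1" "ahlfors_regular F t \<mu> c2 C2" "diameter E = dE"
      "diameter F = dF" "2 < q" "F = cantor_set q" using H by blast+
    have aF: "areg (cantor_set q) t \<mu> c2 C2"
      by (rule areg.intro) (use Ha(2,4,6) dF in simp_all)
    have "q powr t = 2" by (rule dim_eq[OF Ha(5) aF])
    hence "q powr t = q1 powr t" using qt1 by simp
    hence qq: "q = q1" using Ha(5) I1(5) t0 by (metis powr_unique less_trans zero_less_numeral)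
    have aE: "areg E s \<kappa> c1 C1"
      by (rule areg.intro) (use Ha(1,3) dE in simp_all)
    interpret cB E s \<kappa> c1 C1 q1 m n0
      by (rule cB.intro[OF aE], unfold_locales) (use I1(5) sq s1 n01 n0b m in auto)
    have LBe: "LB = L" using Ha(3) by (simp add: LB_def Lam_def A_def L_def)
    have Fc: "F = cantor_set q1" using Ha(6) qq by simp
    obtain \<phi> where \<phi>: "\<phi> ` E \<subseteq> cantor_set q1" "strict_mono_on E \<phi>"
      "\<forall>x\<in>E. \<forall>y\<in>E. \<bar>x - y\<bar> \<le> LB * \<bar>\<phi> x - \<phi> y\<bar> \<and> \<bar>\<phi> x - \<phi> y\<bar> \<le> LB * \<bar>x - y\<bar>"
      using embedB by blast
    show "\<exists>\<phi>. \<phi> ` E \<subseteq> F \<and> strict_mono_on E \<phi> \<and> bilip E \<phi> L"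
      using \<phi> unfolding Fc bilip_def LBe[symmetric] by blast
  qed
qed

lemma caseT:
  assumes dE: "dE \<le> 0" and dF: "0 < dF" and H: "ahlfors_regular E s \<kappa> c1 C1" "diameter E = dE" "diameter F = dF"
  shows "\<exists>\<phi>. \<phi> ` E \<subseteq> F \<and> strict_mono_on E \<phi> \<and> bilip E \<phi> L"
proof -
  have "F \<noteq> {}" using H(3) dF by auto
  then obtain f0 where f0: "f0 \<in> F" by auto
  have bE: "bounded E" using H(1) compact_imp_bounded by (auto simp: ahlfors_regular_def)
  have eq: "x = y" if "x \<in> E" "y \<in> E" for x y
    using diameter_bounded_bound[OF bE that] H(2) dE by (simp add: dist_real_def)
  show ?thesis
  proof (intro exI[of _ "\<lambda>_. f0"] conjI)
    show "(\<lambda>_. f0) ` E \<subseteq> F" using f0 by auto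
    show "strict_mono_on E (\<lambda>_. f0)" using eq by (intro strict_mono_onI) force
    show "bilip E (\<lambda>_. f0) L" using eq unfolding bilip_def by force
  qed
qed

theorem mainTheorem4:
  fixes s t c1 C1 c2 C2 dE dF :: real
  assumes "s < t" and "0 < dF"
  shows "\<exists>L\<ge>1. \<forall>(E::real set) (F::real set) (\<kappa>::real measure) (\<mu>::real measure).
           ahlfors_regular E s \<kappa> c1 C1 \<and> ahlfors_regular F t \<mu> c2 C2 \<and>
           diameter E = dE \<and> diameter F = dF \<and>
           ((\<exists>p>2. E = cantor_set p) \<or> (\<exists>p>2. F = cantor_set p))
           \<longrightarrow> (\<exists>\<phi>::real \<Rightarrow> real. \<phi> ` E \<subseteq> F \<and> strict_mono_on E \<phi> \<and>
                 (\<forall>x\<in>E. \<forall>y\<in>E. \<bar>x - y\<bar> \<le> L * \<bar>\<phi> x - \<phi> y\<bar> \<and>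
                                 \<bar>\<phi> x - \<phi> y\<bar> \<le> L * \<bar>x - y\<bar>))"
proof (cases "0 < dE")
  case False
  show ?thesis
  proof (intro exI[of _ 1] conjI allI impI)
    fix E F \<kappa> \<mu>
    assume H: "ahlfors_regular E s \<kappa> c1 C1 \<and> ahlfors_regular F t \<mu> c2 C2 \<and>
           diameter E = dE \<and> diameter F = dF \<and>
           ((\<exists>p>2. E = cantor_set p) \<or> (\<exists>p>2. F = cantor_set p))"
    have "\<exists>\<phi>. \<phi> ` E \<subseteq> F \<and> strict_mono_on E \<phi> \<and> bilip E \<phi> 1"
      using False H assms(2) by (intro caseT) auto
    thus "\<exists>\<phi>::real \<Rightarrow> real. \<phi> ` E \<subseteq> F \<and> strict_mono_on E \<phi> \<and>
                 (\<forall>x\<in>E. \<forall>y\<in>E. \<bar>x - y\<bar> \<le> 1 * \<bar>\<phi> x - \<phi> y\<bar> \<and> \<bar>\<phi> x - \<phi> y\<bar> \<le> 1 * \<bar>x - y\<bar>)"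
      by (simp add: bilip_def)
  qed simp
next
  case True
  obtain LA where LA: "1 \<le> LA" "\<forall>E F \<kappa> \<mu> p. ahlfors_regular E s \<kappa> c1 C1 \<and> ahlfors_regular F t \<mu> c2 C2 \<and>
     diameter E = dE \<and> diameter F = dF \<and> 2 < p \<and> E = cantor_set p \<longrightarrow>
     (\<exists>\<phi>. \<phi> ` E \<subseteq> F \<and> strict_mono_on E \<phi> \<and> bilip E \<phi> LA)"
    using caseA[OF assms True] by blast
  obtain LB where LB: "1 \<le> LB" "\<forall>E F \<kappa> \<mu> q. ahlfors_regular E s \<kappa> c1 C1 \<and> ahlfors_regular F t \<mu> c2 C2 \<and>
     diameter E = dE \<and> diameter F = dF \<and> 2 < q \<and> F = cantor_set q \<longrightarrow>
     (\<exists>\<phi>. \<phi> ` E \<subseteq> F \<and> strict_mono_on E \<phi> \<and> bilip E \<phi> LB)"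
    using caseB[OF assms True] by blast
  show ?thesis
  proof (intro exI[of _ "max LA LB"] conjI allI impI)
    show "1 \<le> max LA LB" using LA by simp
    fix E F \<kappa> \<mu>
    assume H: "ahlfors_regular E s \<kappa> c1 C1 \<and> ahlfors_regular F t \<mu> c2 C2 \<and>
           diameter E = dE \<and> diameter F = dF \<and>
           ((\<exists>p>2. E = cantor_set p) \<or> (\<exists>p>2. F = cantor_set p))"
    have "\<exists>\<phi>. \<phi> ` E \<subseteq> F \<and> strict_mono_on E \<phi> \<and> bilip E \<phi> (max LA LB)"
    proof (cases "\<exists>p>2. E = cantor_set p")
      case True
      then obtain p where "2 < p" "E = cantor_set p" by blast
      then obtain \<phi> where "\<phi> ` E \<subseteq> F" "strict_mono_on E \<phi>" "bilip E \<phi> LA"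
        using LA(2) H by blast
      thus ?thesis using bilip_mono[of E \<phi> LA "max LA LB"] by auto
    next
      case False
      then obtain p where "2 < p" "F = cantor_set p" using H by blast
      then obtain \<phi> where "\<phi> ` E \<subseteq> F" "strict_mono_on E \<phi>" "bilip E \<phi> LB"
        using LB(2) H by blast
      thus ?thesis using bilip_mono[of E \<phi> LB "max LA LB"] by auto
    qed
    thus "\<exists>\<phi>::real \<Rightarrow> real. \<phi> ` E \<subseteq> F \<and> strict_mono_on E \<phi> \<and>
                 (\<forall>x\<in>E. \<forall>y\<in>E. \<bar>x - y\<bar> \<le> max LA LB * \<bar>\<phi> x - \<phi> y\<bar> \<and> \<bar>\<phi> x - \<phi> y\<bar> \<le> max LA LB * \<bar>x - y\<bar>)"
      by (simp add: bilip_def)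
  qed
qed

end
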